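(* Let $p\leq q$ and $L,M\in\mathrm{Gr}_{p,q}$ with Jordan angles $\psi_j=\Psi_j[L,M]$, and assume $\psi_1\neq0$, $\psi_p\neq\pi/2$, and $\psi_{j+1}\neq\psi_j$ for all $j$. Let $e_1,\dots,e_p$ be an orthonormal basis of $L$ and $f_1,\dots,f_p$ an orthonormal basis of $M$ with $\langle e_i,f_j\rangle=0$ for $i\neq j$ and $\langle e_j,f_j\rangle=\cos\psi_j$. Let $r_1,\dots,r_q$ be an orthonormal basis of $M^\perp$ such that $e_j=f_j\cos\psi_j-r_j\sin\psi_j$ for $j=1,\dots,p$. Let $H:M\to M^\perp$ be a tangent vector to $\mathrm{Gr}_{p,q}$ at $M$, with matrix elements $h_{jk}$ defined by $Hf_j=\sum_{k=1}^q h_{jk}r_k$. Let $M(\varepsilon)$ be a $C^\infty$-smooth curve in $\mathrm{Gr}_{p,q}$ with $M(0)=M$ and $M'(0)=H$. Then for every $j=1,\dots,p$, $$\frac{d}{d\varepsilon}\Psi_j[L,M(\varepsilon)]\Big|_{\varepsilon=0}=h_{jj}.$$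
   Context: $\mathrm{Gr}_{p,q}$ is the set of $p$-dimensional linear subspaces of $\mathbb{R}^{p+q}$ with the standard scalar product. For $L,M\in\mathrm{Gr}_{p,q}$ with orthonormal bases $e_i$ of $L$, $f_j$ of $M$, let $\lambda_1\geq\dots\geq\lambda_p$ be the singular values of the matrix $(\langle e_i,f_j\rangle)$; the Jordan angles are $\Psi_j[L,M]=\arccos\lambda_j$, $0\leq\Psi_1\leq\dots\leq\Psi_p\leq\pi/2$. Tangent vectors at $M$ are identified with linear operators $M\to M^\perp$: for a curve with $M(0)=M$, $M(\varepsilon)$ is for small $\varepsilon$ the graph of $A(\varepsilon):M\to M^\perp$ with $A(0)=0$, and $M'(0):=A'(0)$. *)

theory Defs
  imports "HOL-Analysis.Analysis"
begin

text \<open>The Grassmannian Gr_{p,q}: p-dimensional linear subspaces of R^(p+q).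
  The ambient space is real^'n, with CARD('n) = p + q assumed in the statement.\<close>
definition Gr :: "nat \<Rightarrow> ('n::finite) itself \<Rightarrow> (real^'n) set set" where
  "Gr p _ = {L. subspace L \<and> dim L = p}"

definition orthonormal_basis :: "nat \<Rightarrow> (nat \<Rightarrow> 'a::euclidean_space) \<Rightarrow> 'a set \<Rightarrow> bool" where
  "orthonormal_basis m e S \<longleftrightarrow>
     (\<forall>i\<in>{1..m}. e i \<in> S) \<and>
     (\<forall>i\<in>{1..m}. \<forall>k\<in>{1..m}. e i \<bullet> e k = (if i = k then 1 else 0)) \<and>
     span (e ` {1..m}) = S"

definition is_singular_values :: "nat \<Rightarrow> (nat \<Rightarrow> nat \<Rightarrow> real) \<Rightarrow> (nat \<Rightarrow> real) \<Rightarrow> bool" where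
  "is_singular_values p C \<sigma> \<longleftrightarrow>
     (\<forall>j\<in>{1..p}. 0 \<le> \<sigma> j) \<and>
     (\<forall>j. 1 \<le> j \<and> j < p \<longrightarrow> \<sigma> (j + 1) \<le> \<sigma> j) \<and>
     (\<exists>U V :: nat \<Rightarrow> nat \<Rightarrow> real.
        (\<forall>i\<in>{1..p}. \<forall>l\<in>{1..p}. (\<Sum>k=1..p. U i k * U l k) = (if i = l then 1 else 0)) \<and>
        (\<forall>i\<in>{1..p}. \<forall>l\<in>{1..p}. (\<Sum>k=1..p. V i k * V l k) = (if i = l then 1 else 0)) \<and>
        (\<forall>i\<in>{1..p}. \<forall>k\<in>{1..p}. C i k = (\<Sum>l=1..p. U i l * \<sigma> l * V k l)))"

definition singular_value :: "nat \<Rightarrow> (nat \<Rightarrow> nat \<Rightarrow> real) \<Rightarrow> nat \<Rightarrow> real" where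
  "singular_value p C j = (SOME \<sigma>. is_singular_values p C \<sigma>) j"

definition jordan_angle :: "('a::euclidean_space) set \<Rightarrow> 'a set \<Rightarrow> nat \<Rightarrow> real" where
  "jordan_angle L M j =
     (let p = dim L;
          e = (SOME e. orthonormal_basis p e L);
          f = (SOME f. orthonormal_basis p f M)
      in arccos (singular_value p (\<lambda>i k. e i \<bullet> f k) j))"

definition smooth_on :: "real set \<Rightarrow> (real \<Rightarrow> 'a::real_normed_vector) \<Rightarrow> bool" where
  "smooth_on S g \<longleftrightarrow> (\<exists>D. D 0 = g \<and>
      (\<forall>k. \<forall>t\<in>S. (D k has_vector_derivative D (Suc k) t) (at t)))"

text \<open>Chart of the Grassmannian around M0: for |eps - eps0| < delta, Mc eps is the graph
  of the linear operator A eps : M0 -> M0^perp.\<close>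
definition graph_chart ::
  "'a::euclidean_space set \<Rightarrow> (real \<Rightarrow> 'a set) \<Rightarrow> real \<Rightarrow> real \<Rightarrow> (real \<Rightarrow> 'a \<Rightarrow> 'a) \<Rightarrow> bool" where
  "graph_chart M0 Mc eps0 \<delta> A \<longleftrightarrow>
     (\<forall>\<epsilon>. \<bar>\<epsilon> - eps0\<bar> < \<delta> \<longrightarrow>
        linear (A \<epsilon>) \<and> A \<epsilon> ` M0 \<subseteq> orthogonal_comp M0 \<and>
        Mc \<epsilon> = {x + A \<epsilon> x | x. x \<in> M0})"

definition smooth_Gr_curve :: "nat \<Rightarrow> nat \<Rightarrow> real set \<Rightarrow> (real \<Rightarrow> (real^'n::finite) set) \<Rightarrow> bool" where
  "smooth_Gr_curve p q I Mc \<longleftrightarrow>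
     open I \<and> (\<forall>\<epsilon>\<in>I. Mc \<epsilon> \<in> Gr p TYPE('n)) \<and>
     (\<forall>eps0\<in>I. \<exists>\<delta>>0. \<exists>A. graph_chart (Mc eps0) Mc eps0 \<delta> A \<and>
        (\<forall>x\<in>Mc eps0. smooth_on (ball eps0 \<delta>) (\<lambda>\<epsilon>. A \<epsilon> x)))"

text \<open>Tangent vector of the curve at 0: M'(0) = A'(0), for the chart A around M(0).\<close>
definition curve_derivative_at0 :: "(real \<Rightarrow> 'a::euclidean_space set) \<Rightarrow> ('a \<Rightarrow> 'a) \<Rightarrow> bool" where
  "curve_derivative_at0 Mc H \<longleftrightarrow>
     (\<exists>\<delta>>0. \<exists>A. graph_chart (Mc 0) Mc 0 \<delta> A \<and>
        (\<forall>x\<in>Mc 0. ((\<lambda>\<epsilon>. A \<epsilon> x) has_vector_derivative H x) (at 0)))"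

end

theory Submission
  imports Defs
begin


definition ortho :: "nat \<Rightarrow> (nat \<Rightarrow> 'a::euclidean_space) \<Rightarrow> bool" where
  "ortho n v \<longleftrightarrow> (\<forall>i\<in>{1..n}. \<forall>k\<in>{1..n}. v i \<bullet> v k = (if i = k then 1 else 0))"

lemma ortho_inj: "ortho n v \<Longrightarrow> inj_on v {1..n}"
  unfolding inj_on_def
proof (intro ballI impI)
  fix i k assume o: "ortho n v" and i: "i \<in> {1..n}" and k: "k \<in> {1..n}" and e: "v i = v k"
  have "v i \<bullet> v k = 1" using o i e unfolding ortho_def by (metis (full_types))
  then show "i = k" using o i k unfolding ortho_def by (auto split: if_splits)
qed

lemma ortho_indep: "ortho n v \<Longrightarrow> independent (v ` {1..n})"
  apply (rule pairwise_orthogonal_independent)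
   apply (auto simp: pairwise_def orthogonal_def ortho_def)
  by (metis atLeastAtMost_iff inner_zero_left zero_neq_one)

lemma ortho_card: "ortho n v \<Longrightarrow> card (v ` {1..n}) = n"
  using ortho_inj card_image by fastforce

lemma ortho_spans:
  assumes o: "ortho n v" and inS: "\<forall>i\<in>{1..n}. v i \<in> S" and dS: "dim S = n"
  shows "S \<subseteq> span (v ` {1..n})"
proof -
  have "v ` {1..n} \<subseteq> S" using inS by auto
  then show ?thesis
    using card_ge_dim_independent[of "v ` {1..n}" S] ortho_indep[OF o] ortho_card[OF o] dS by auto
qed

lemma ortho_expand_span:
  assumes o: "ortho n v" and x: "x \<in> span (v ` {1..n})"
  shows "x = (\<Sum>i=1..n. (x \<bullet> v i) *\<^sub>R v i)"
proof -
  define y where "y = x - (\<Sum>i=1..n. (x \<bullet> v i) *\<^sub>R v i)"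
  have yk: "y \<bullet> v k = 0" if k: "k \<in> {1..n}" for k
  proof -
    have "(\<Sum>i=1..n. (x \<bullet> v i) *\<^sub>R v i) \<bullet> v k = (\<Sum>i=1..n. (x \<bullet> v i) * (v i \<bullet> v k))"
      by (simp add: inner_sum_left)
    also have "\<dots> = (\<Sum>i=1..n. if i = k then x \<bullet> v k else 0)"
      using o k unfolding ortho_def by (intro sum.cong) auto
    also have "\<dots> = x \<bullet> v k" using k by simp
    finally show ?thesis unfolding y_def by (simp add: inner_diff_left)
  qed
  have ys: "y \<in> span (v ` {1..n})" unfolding y_def
    by (intro span_diff x span_sum span_scale span_base) auto
  have "orthogonal y y"
    by (rule orthogonal_to_span[OF ys]) (use yk in \<open>auto simp: orthogonal_def\<close>)
  then have "y = 0" by (simp add: orthogonal_def)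
  then show ?thesis unfolding y_def by simp
qed

lemma ortho_expand:
  assumes o: "ortho n v" and inS: "\<forall>i\<in>{1..n}. v i \<in> S" and dS: "dim S = n" and x: "x \<in> S"
  shows "x = (\<Sum>i=1..n. (x \<bullet> v i) *\<^sub>R v i)"
  using ortho_expand_span[OF o] ortho_spans[OF o inS dS] x by auto

lemma ortho_onb:
  assumes o: "ortho n v" and inS: "\<forall>i\<in>{1..n}. v i \<in> S" and dS: "dim S = n" and sS: "subspace S"
  shows "orthonormal_basis n v S"
  unfolding orthonormal_basis_def
proof (intro conjI)
  show "span (v ` {1..n}) = S"
    using ortho_spans[OF o inS dS] span_minimal[of "v ` {1..n}" S] inS sS by auto
qed (use o inS in \<open>auto simp: ortho_def\<close>)

lemma onb_ortho: "orthonormal_basis n v S \<Longrightarrow> ortho n v"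
  unfolding orthonormal_basis_def ortho_def by auto

lemma onb_in: "orthonormal_basis n v S \<Longrightarrow> i \<in> {1..n} \<Longrightarrow> v i \<in> S"
  unfolding orthonormal_basis_def by auto

lemma onb_expand: "orthonormal_basis n v S \<Longrightarrow> x \<in> S \<Longrightarrow> x = (\<Sum>i=1..n. (x \<bullet> v i) *\<^sub>R v i)"
  unfolding orthonormal_basis_def using ortho_expand_span[of n v x] ortho_def by auto

lemma onb_parseval:
  assumes "orthonormal_basis n v S" "x \<in> S"
  shows "x \<bullet> y = (\<Sum>i=1..n. (x \<bullet> v i) * (y \<bullet> v i))"
proof -
  have "x \<bullet> y = (\<Sum>i=1..n. (x \<bullet> v i) *\<^sub>R v i) \<bullet> y" using onb_expand[OF assms] by simp
  then show ?thesis by (simp add: inner_sum_left inner_sum_right inner_commute mult.commute)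
qed

lemma ortho_extend_step:
  assumes sS: "subspace S" and dS: "dim S = n" and J: "J \<subseteq> {1..n}" and i0: "i0 \<in> {1..n} - J"
    and oJ: "\<forall>i\<in>J. \<forall>k\<in>J. y i \<bullet> y k = (if i = k then 1 else 0)" and yS: "\<forall>i\<in>J. y i \<in> S"
  shows "\<exists>z. z \<in> S \<and> norm z = 1 \<and> (\<forall>k\<in>J. z \<bullet> y k = 0)"
proof -
  have fJ: "finite J" using J finite_subset by blast
  have cJ: "card J < n"
  proof -
    have "J \<subset> {1..n}" using J i0 by auto
    then have "card J < card {1..n}" by (intro psubset_card_mono) auto
    then show ?thesis by simp
  qed
  have "\<not> S \<subseteq> span (y ` J)"
  proof
    assume "S \<subseteq> span (y ` J)"
    then have "dim S \<le> card (y ` J)" using dim_le_card fJ by blast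
    also have "\<dots> \<le> card J" using card_image_le fJ by blast
    finally show False using cJ dS by simp
  qed
  then obtain z where zS: "z \<in> S" and zn: "z \<notin> span (y ` J)" by auto
  define z' where "z' = z - (\<Sum>i\<in>J. (z \<bullet> y i) *\<^sub>R y i)"
  have z'S: "z' \<in> S" unfolding z'_def using sS zS yS
    by (intro subspace_diff subspace_sum subspace_scale) auto
  have z'0: "z' \<noteq> 0"
  proof
    assume "z' = 0"
    then have "z = (\<Sum>i\<in>J. (z \<bullet> y i) *\<^sub>R y i)" unfolding z'_def by simp
    moreover have "(\<Sum>i\<in>J. (z \<bullet> y i) *\<^sub>R y i) \<in> span (y ` J)"
      by (intro span_sum span_scale span_base) auto
    ultimately show False using zn by simp
  qed
  have z'o: "z' \<bullet> y k = 0" if k: "k \<in> J" for k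
  proof -
    have "(\<Sum>i\<in>J. (z \<bullet> y i) *\<^sub>R y i) \<bullet> y k = (\<Sum>i\<in>J. (z \<bullet> y i) * (y i \<bullet> y k))"
      by (simp add: inner_sum_left)
    also have "\<dots> = (\<Sum>i\<in>J. if i = k then z \<bullet> y k else 0)"
      using oJ k by (intro sum.cong) auto
    also have "\<dots> = z \<bullet> y k" using k fJ by simp
    finally show ?thesis unfolding z'_def by (simp add: inner_diff_left)
  qed
  show ?thesis
  proof (intro exI conjI ballI)
    show "z' /\<^sub>R norm z' \<in> S" using z'S sS by (simp add: subspace_scale)
    show "norm (z' /\<^sub>R norm z') = 1" using z'0 by simp
    show "(z' /\<^sub>R norm z') \<bullet> y k = 0" if "k \<in> J" for k using z'o[OF that] by simp
  qed
qed

lemma ortho_extend_aux: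
  assumes sS: "subspace S" and dS: "dim S = n"
  shows "\<forall>J y. card ({1..n} - J) = m \<longrightarrow> J \<subseteq> {1..n} \<longrightarrow>
      (\<forall>i\<in>J. \<forall>k\<in>J. y i \<bullet> y k = (if i = k then 1 else 0)) \<longrightarrow> (\<forall>i\<in>J. y i \<in> S) \<longrightarrow>
      (\<exists>y'. ortho n y' \<and> (\<forall>i\<in>{1..n}. y' i \<in> S) \<and> (\<forall>i\<in>J. y' i = y i))"
proof (induction m)
  case 0
  show ?case
  proof (intro allI impI)
    fix J and y :: "nat \<Rightarrow> 'a"
    assume c: "card ({1..n} - J) = 0" and J: "J \<subseteq> {1..n}"
      and oJ: "\<forall>i\<in>J. \<forall>k\<in>J. y i \<bullet> y k = (if i = k then 1 else 0)" and yS: "\<forall>i\<in>J. y i \<in> S"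
    have "J = {1..n}" using c J by auto
    then show "\<exists>y'. ortho n y' \<and> (\<forall>i\<in>{1..n}. y' i \<in> S) \<and> (\<forall>i\<in>J. y' i = y i)"
      using oJ yS unfolding ortho_def by blast
  qed
next
  case (Suc m)
  show ?case
  proof (intro allI impI)
    fix J and y :: "nat \<Rightarrow> 'a"
    assume c: "card ({1..n} - J) = Suc m" and J: "J \<subseteq> {1..n}"
      and oJ: "\<forall>i\<in>J. \<forall>k\<in>J. y i \<bullet> y k = (if i = k then 1 else 0)" and yS: "\<forall>i\<in>J. y i \<in> S"
    obtain i0 where i0: "i0 \<in> {1..n} - J" using c by (metis card.empty ex_in_conv nat.distinct(1))
    obtain z where z: "z \<in> S" "norm z = 1" "\<forall>k\<in>J. z \<bullet> y k = 0"
      using ortho_extend_step[OF sS dS J i0 oJ yS] by blast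
    define y2 where "y2 = y(i0 := z)"
    have i0J: "i0 \<notin> J" using i0 by auto
    have c2: "card ({1..n} - insert i0 J) = m"
    proof -
      have "{1..n} - insert i0 J = ({1..n} - J) - {i0}" by auto
      then show ?thesis using c i0 by simp
    qed
    have J2: "insert i0 J \<subseteq> {1..n}" using J i0 by auto
    have zz: "z \<bullet> z = 1" using z(2) by (simp add: dot_square_norm)
    have o2: "\<forall>i\<in>insert i0 J. \<forall>k\<in>insert i0 J. y2 i \<bullet> y2 k = (if i = k then 1 else 0)"
      using oJ z(3) zz i0J unfolding y2_def by (auto simp: inner_commute)
    have y2S: "\<forall>i\<in>insert i0 J. y2 i \<in> S" using yS z(1) unfolding y2_def by auto
    obtain y' where y': "ortho n y'" "\<forall>i\<in>{1..n}. y' i \<in> S" "\<forall>i\<in>insert i0 J. y' i = y2 i"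
      using Suc.IH c2 J2 o2 y2S by blast
    show "\<exists>y'. ortho n y' \<and> (\<forall>i\<in>{1..n}. y' i \<in> S) \<and> (\<forall>i\<in>J. y' i = y i)"
      using y' i0J unfolding y2_def by (intro exI[of _ y']) auto
  qed
qed

lemma ortho_extend:
  assumes "subspace S" "dim S = n" "J \<subseteq> {1..n}"
    "\<forall>i\<in>J. \<forall>k\<in>J. y i \<bullet> y k = (if i = k then 1 else 0)" "\<forall>i\<in>J. y i \<in> S"
  shows "\<exists>y'. ortho n y' \<and> (\<forall>i\<in>{1..n}. y' i \<in> S) \<and> (\<forall>i\<in>J. y' i = y i)"
  using ortho_extend_aux[OF assms(1,2)] assms(3-5) by blast

lemma onb_exists:
  assumes "subspace S" "dim S = n"
  shows "\<exists>v. orthonormal_basis n v S"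
  using ortho_extend[OF assms, of "{}"] ortho_onb assms by blast



lemma real_quad_zero:
  fixes c K :: real
  assumes h: "\<forall>t. 2 * t * c \<le> t\<^sup>2 * K" and K: "K \<ge> 0"
  shows "c = 0"
proof (rule ccontr)
  assume c0: "c \<noteq> 0"
  define t where "t = c / (K + 1)"
  have K1: "K + 1 > 0" using K by simp
  have tc: "t * (K + 1) = c" unfolding t_def using K1 by simp
  have "2 * t * c \<le> t\<^sup>2 * K" using h by blast
  then have "2 * t * c * (K + 1)\<^sup>2 \<le> t\<^sup>2 * K * (K + 1)\<^sup>2"
    by (rule mult_right_mono) simp
  moreover have "2 * t * c * (K + 1)\<^sup>2 = 2 * c * (t * (K + 1)) * (K + 1)"
    by (simp add: power2_eq_square algebra_simps)
  moreover have "t\<^sup>2 * K * (K + 1)\<^sup>2 = (t * (K + 1))\<^sup>2 * K"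
    by (simp add: power2_eq_square algebra_simps)
  ultimately have "2 * c * c * (K + 1) \<le> c\<^sup>2 * K" unfolding tc by simp
  then have "2 * c * c * (K + 1) \<le> c * c * K" by (simp add: power2_eq_square)
  moreover have "c * c > 0" using c0 not_real_square_gt_zero by blast
  moreover have "c * c * (2 * (K + 1)) = 2 * c * c * (K + 1)" by (simp add: algebra_simps)
  ultimately have "c * c * (2 * (K + 1)) \<le> c * c * K" by (simp only:)
  then have "2 * (K + 1) \<le> K" using mult_le_cancel_left_pos[OF \<open>c * c > 0\<close>] by blast
  then show False using K by (simp add: distrib_left)
qed

lemma max_orth:
  fixes T :: "'a::euclidean_space \<Rightarrow> 'a"
  assumes T: "linear T" and w1: "norm w = 1" and wv: "w \<bullet> v = 0"
    and bound: "\<And>t::real. norm (T (w + t *\<^sub>R v)) \<le> norm (T w) * norm (w + t *\<^sub>R v)"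
  shows "T w \<bullet> T v = 0"
proof -
  let ?M = "norm (T w)"
  have "2 * t * (T w \<bullet> T v) \<le> t\<^sup>2 * (?M\<^sup>2 * (v \<bullet> v))" for t
  proof -
    have "(norm (T (w + t *\<^sub>R v)))\<^sup>2 \<le> (?M * norm (w + t *\<^sub>R v))\<^sup>2"
      using bound[of t] by (intro power_mono) auto
    moreover have "(norm (T (w + t *\<^sub>R v)))\<^sup>2 = ?M\<^sup>2 + 2 * t * (T w \<bullet> T v) + t\<^sup>2 * (T v \<bullet> T v)"
      using T by (simp only: linear_add linear_scale power2_norm_eq_inner inner_add_left inner_add_right
          inner_scaleR_left inner_scaleR_right inner_commute[of "T v" "T w"]) (simp add: power2_eq_square algebra_simps)
    moreover have "(?M * norm (w + t *\<^sub>R v))\<^sup>2 = ?M\<^sup>2 * (1 + t\<^sup>2 * (v \<bullet> v))"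
    proof -
      have ww: "w \<bullet> w = 1" using w1 by (simp add: dot_square_norm)
      have "(norm (w + t *\<^sub>R v))\<^sup>2 = 1 + t\<^sup>2 * (v \<bullet> v)"
        unfolding power2_norm_eq_inner using ww wv
        by (simp add: inner_add_left inner_add_right inner_commute power2_eq_square)
      then show ?thesis by (simp add: power_mult_distrib)
    qed
    ultimately have "2 * t * (T w \<bullet> T v) \<le> ?M\<^sup>2 * t\<^sup>2 * (v \<bullet> v) - t\<^sup>2 * (T v \<bullet> T v)"
      by (simp add: algebra_simps)
    also have "\<dots> \<le> t\<^sup>2 * (?M\<^sup>2 * (v \<bullet> v))" by (simp add: algebra_simps)
    finally show ?thesis .
  qed
  then show ?thesis by (intro real_quad_zero[where K = "?M\<^sup>2 * (v \<bullet> v)"]) auto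
qed

lemma dim_hyper_int:
  fixes w :: "'a::euclidean_space"
  assumes sS: "subspace S" and dS: "dim S = Suc n" and w: "w \<noteq> 0" and wS: "w \<in> S"
  shows "dim (S \<inter> {x. w \<bullet> x = 0}) = n"
proof -
  let ?H = "{x. w \<bullet> x = 0}"
  have sH: "subspace ?H" by (rule subspace_hyperplane)
  have U: "{x + y |x y. x \<in> S \<and> y \<in> ?H} = UNIV"
  proof -
    have "z \<in> {x + y |x y. x \<in> S \<and> y \<in> ?H}" for z
    proof -
    let ?a = "((z \<bullet> w) / (w \<bullet> w)) *\<^sub>R w"
    have "?a \<in> S" using wS sS by (simp add: subspace_scale)
    moreover have "z - ?a \<in> ?H" using w by (simp add: inner_diff_right inner_commute)
    moreover have "z = ?a + (z - ?a)" by simp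
    ultimately show ?thesis by blast
    qed
    then show ?thesis by auto
  qed
  have "dim {x + y |x y. x \<in> S \<and> y \<in> ?H} + dim (S \<inter> ?H) = dim S + dim ?H"
    by (rule dim_sums_Int[OF sS sH])
  then have "DIM('a) + dim (S \<inter> ?H) = Suc n + (DIM('a) - 1)"
    using U dS dim_hyperplane[OF w] by simp
  then show ?thesis using DIM_positive[where 'a='a] by linarith
qed



lemma spectral_seq:
  fixes T :: "'a::euclidean_space \<Rightarrow> 'a"
  assumes T: "linear T"
  shows "subspace S \<Longrightarrow> dim S = n \<Longrightarrow> \<exists>w. ortho n w \<and> (\<forall>i\<in>{1..n}. w i \<in> S) \<and>
     (\<forall>a\<in>{1..n}. \<forall>b\<in>{1..n}. a \<noteq> b \<longrightarrow> T (w a) \<bullet> T (w b) = 0) \<and>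
     (\<forall>a\<in>{1..n}. \<forall>b\<in>{1..n}. a \<le> b \<longrightarrow> norm (T (w b)) \<le> norm (T (w a)))"
proof (induction n arbitrary: S)
  case 0
  show ?case by (intro exI[of _ "\<lambda>_. 0"]) (auto simp: ortho_def)
next
  case (Suc n)
  note sS = Suc.prems(1) and dS = Suc.prems(2)
  let ?Sph = "sphere 0 1 \<inter> S"
  have cpt: "compact ?Sph" using closed_subspace[OF sS] compact_sphere by (intro compact_Int_closed) auto
  obtain u where u: "u \<in> S" "u \<noteq> 0"
    using dS dim_eq_0[of S] by (metis nat.distinct(1) subsetI singletonI)
  have "u /\<^sub>R norm u \<in> ?Sph" using u sS by (simp add: subspace_scale)
  then have ne: "?Sph \<noteq> {}" by blast
  have bl: "bounded_linear T" using T linear_conv_bounded_linear by blast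
  have cont: "continuous_on ?Sph (\<lambda>x. norm (T x))"
    by (intro continuous_on_norm linear_continuous_on bl)
  obtain w0 where w0: "w0 \<in> ?Sph" and w0max: "\<forall>y\<in>?Sph. norm (T y) \<le> norm (T w0)"
    using continuous_attains_sup[OF cpt ne cont] by blast
  have w0S: "w0 \<in> S" and w01: "norm w0 = 1" using w0 by auto
  have w00: "w0 \<noteq> 0" using w01 by auto
  have bound: "norm (T x) \<le> norm (T w0) * norm x" if xS: "x \<in> S" for x
  proof (cases "x = 0")
    case True then show ?thesis using linear_0[OF T] by simp
  next
    case False
    then have "x /\<^sub>R norm x \<in> ?Sph" using xS sS by (simp add: subspace_scale)
    then have "norm (T (x /\<^sub>R norm x)) \<le> norm (T w0)" using w0max by blast
    then have "norm (T x) / norm x \<le> norm (T w0)" using linear_scale[OF T] by (simp add: divide_inverse mult.commute)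
    then show ?thesis using False by (simp add: divide_le_eq mult.commute)
  qed
  define S' where "S' = S \<inter> {x. w0 \<bullet> x = 0}"
  have sS': "subspace S'" unfolding S'_def by (intro subspace_inter sS subspace_hyperplane)
  have dS': "dim S' = n" unfolding S'_def by (rule dim_hyper_int[OF sS dS w00 w0S])
  obtain w' where w'o: "ortho n w'" and w'S: "\<forall>i\<in>{1..n}. w' i \<in> S'"
    and w'T: "\<forall>a\<in>{1..n}. \<forall>b\<in>{1..n}. a \<noteq> b \<longrightarrow> T (w' a) \<bullet> T (w' b) = 0"
    and w'd: "\<forall>a\<in>{1..n}. \<forall>b\<in>{1..n}. a \<le> b \<longrightarrow> norm (T (w' b)) \<le> norm (T (w' a))"
    using Suc.IH[OF sS' dS'] by blast
  have orthT: "T w0 \<bullet> T v = 0" if vS': "v \<in> S'" for v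
  proof (rule max_orth[OF T w01])
    show "w0 \<bullet> v = 0" using vS' unfolding S'_def by auto
    fix t :: real
    have "w0 + t *\<^sub>R v \<in> S" using vS' w0S sS unfolding S'_def by (simp add: subspace_add subspace_scale)
    then show "norm (T (w0 + t *\<^sub>R v)) \<le> norm (T w0) * norm (w0 + t *\<^sub>R v)" by (rule bound)
  qed
  define w where "w i = (if i = 1 then w0 else w' (i - 1))" for i
  have idx: "i - 1 \<in> {1..n}" if "i \<in> {1..Suc n}" "i \<noteq> 1" for i using that by auto
  have w'S1: "w' i \<in> S" "w0 \<bullet> w' i = 0" if "i \<in> {1..n}" for i
    using w'S that unfolding S'_def by auto
  show ?case
  proof (intro exI[of _ w] conjI ballI impI)
    show "ortho (Suc n) w" unfolding ortho_def
    proof (intro ballI)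
      fix i k assume i: "i \<in> {1..Suc n}" and k: "k \<in> {1..Suc n}"
      show "w i \<bullet> w k = (if i = k then 1 else 0)"
      proof (cases "i = 1"; cases "k = 1")
        assume "i = 1" "k = 1" then show ?thesis using w01 unfolding w_def by (simp add: dot_square_norm)
      next
        assume "i = 1" "k \<noteq> 1" then show ?thesis using w'S1(2)[OF idx[OF k]] unfolding w_def by simp
      next
        assume "i \<noteq> 1" "k = 1" then show ?thesis using w'S1(2)[OF idx[OF i]] unfolding w_def
          by (simp add: inner_commute)
      next
        assume a: "i \<noteq> 1" "k \<noteq> 1"
        then have "w' (i - 1) \<bullet> w' (k - 1) = (if i - 1 = k - 1 then 1 else 0)"
          using w'o idx[OF i] idx[OF k] unfolding ortho_def by blast
        moreover have "(i - 1 = k - 1) = (i = k)" using i k a by auto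
        ultimately show ?thesis using a unfolding w_def by simp
      qed
    qed
    show "w i \<in> S" if "i \<in> {1..Suc n}" for i
      using w0S w'S1(1)[OF idx[OF that]] unfolding w_def by auto
    show "T (w a) \<bullet> T (w b) = 0" if a: "a \<in> {1..Suc n}" and b: "b \<in> {1..Suc n}" and ab: "a \<noteq> b" for a b
    proof (cases "a = 1"; cases "b = 1")
      assume "a = 1" "b = 1" then show ?thesis using ab by simp
    next
      assume "a = 1" "b \<noteq> 1" then show ?thesis using orthT w'S idx[OF b] unfolding w_def by auto
    next
      assume c: "a \<noteq> 1" "b = 1"
      have "T w0 \<bullet> T (w' (a - 1)) = 0" using orthT w'S idx[OF a c(1)] by auto
      then show ?thesis using c unfolding w_def by (simp add: inner_commute)
    next
      assume c: "a \<noteq> 1" "b \<noteq> 1"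
      then have "a - 1 \<noteq> b - 1" using a b ab by auto
      then show ?thesis using c w'T idx[OF a] idx[OF b] unfolding w_def by auto
    qed
    show "norm (T (w b)) \<le> norm (T (w a))" if a: "a \<in> {1..Suc n}" and b: "b \<in> {1..Suc n}" and ab: "a \<le> b" for a b
    proof (cases "a = 1"; cases "b = 1")
      assume "a = 1" "b = 1" then show ?thesis by simp
    next
      assume c: "a = 1" "b \<noteq> 1"
      have wb: "w' (b - 1) \<in> S" using w'S1(1)[OF idx[OF b c(2)]] .
      have "norm (w' (b - 1)) = 1" using w'o idx[OF b c(2)] unfolding ortho_def
        by (metis norm_eq_sqrt_inner real_sqrt_one)
      then show ?thesis using bound[OF wb] c unfolding w_def by simp
    next
      assume "a \<noteq> 1" "b = 1" then show ?thesis using ab a by auto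
    next
      assume c: "a \<noteq> 1" "b \<noteq> 1"
      then have "a - 1 \<le> b - 1" using ab by auto
      then show ?thesis using c w'd idx[OF a] idx[OF b] unfolding w_def by auto
    qed
  qed
qed



definition Tproj :: "nat \<Rightarrow> (nat \<Rightarrow> 'a::euclidean_space) \<Rightarrow> 'a \<Rightarrow> 'a" where
  "Tproj n g x = (\<Sum>k=1..n. (x \<bullet> g k) *\<^sub>R g k)"

lemma sum_kron: "(l::nat) \<in> {1..p} \<Longrightarrow> (\<Sum>n=1..p. (if l = n then 1 else 0) * f n) = (f l :: real)"
proof -
  assume l: "l \<in> {1..p}"
  have "(\<Sum>n=1..p. (if l = n then 1 else 0) * f n) = (\<Sum>n\<in>{1..p}. if l = n then f n else 0)"
    by (intro sum.cong) auto
  also have "\<dots> = f l" using l by (simp add: sum.delta')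
  finally show ?thesis .
qed

lemma sum_kron': "(l::nat) \<in> {1..p} \<Longrightarrow> (\<Sum>n=1..p. f n * (if n = l then 1 else 0)) = (f l :: real)"
proof -
  assume l: "l \<in> {1..p}"
  have "(\<Sum>n=1..p. f n * (if n = l then 1 else 0)) = (\<Sum>n\<in>{1..p}. if l = n then f n else 0)"
    by (intro sum.cong) auto
  also have "\<dots> = f l" using l by (simp add: sum.delta')
  finally show ?thesis .
qed

lemma linear_Tproj: "linear (Tproj n g)"
  unfolding Tproj_def
  by (rule linearI) (simp_all add: inner_add_left scaleR_add_left sum.distrib scaleR_sum_right)

lemma Tproj_in: "orthonormal_basis n g K \<Longrightarrow> subspace K \<Longrightarrow> Tproj n g x \<in> K"
  unfolding Tproj_def by (intro subspace_sum subspace_scale) (auto dest: onb_in)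

lemma Tproj_inner:
  assumes "orthonormal_basis n g K" "y \<in> K"
  shows "Tproj n g x \<bullet> y = x \<bullet> y"
proof -
  have "x \<bullet> y = x \<bullet> (\<Sum>k=1..n. (y \<bullet> g k) *\<^sub>R g k)" using onb_expand[OF assms] by simp
  then show ?thesis unfolding Tproj_def by (simp add: inner_sum_left inner_sum_right mult.commute inner_commute)
qed

lemma Tproj_norm2:
  assumes "orthonormal_basis n g K" "subspace K"
  shows "(norm (Tproj n g x))\<^sup>2 = x \<bullet> Tproj n g x"
  using Tproj_inner[OF assms(1) Tproj_in[OF assms]] by (simp add: power2_norm_eq_inner inner_commute)

lemma sorted_all:
  fixes \<sigma> :: "nat \<Rightarrow> real"
  assumes "\<forall>j. 1 \<le> j \<and> j < p \<longrightarrow> \<sigma> (j + 1) \<le> \<sigma> j"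
  shows "1 \<le> a \<Longrightarrow> a \<le> b \<Longrightarrow> b \<le> p \<Longrightarrow> \<sigma> b \<le> \<sigma> a"
proof (induction b)
  case 0 then show ?case by simp
next
  case (Suc b)
  show ?case
  proof (cases "a = Suc b")
    case False
    then have "a \<le> b" using Suc.prems by simp
    then have "\<sigma> b \<le> \<sigma> a" using Suc by simp
    moreover have "\<sigma> (b + 1) \<le> \<sigma> b" using assms Suc.prems \<open>a \<le> b\<close> by simp
    ultimately show ?thesis by simp
  qed simp
qed

lemma svd_exists:
  fixes e g :: "nat \<Rightarrow> 'a::euclidean_space"
  assumes sL: "subspace L" and dL: "dim L = p" and e: "orthonormal_basis p e L"
    and sK: "subspace K" and dK: "dim K = p" and g: "orthonormal_basis p g K"
  shows "\<exists>\<sigma>. is_singular_values p (\<lambda>i k. e i \<bullet> g k) \<sigma>"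
proof -
  let ?T = "Tproj p g"
  obtain w where wo: "ortho p w" and wL: "\<forall>i\<in>{1..p}. w i \<in> L"
    and wT: "\<forall>a\<in>{1..p}. \<forall>b\<in>{1..p}. a \<noteq> b \<longrightarrow> ?T (w a) \<bullet> ?T (w b) = 0"
    and wd: "\<forall>a\<in>{1..p}. \<forall>b\<in>{1..p}. a \<le> b \<longrightarrow> norm (?T (w b)) \<le> norm (?T (w a))"
    using spectral_seq[OF linear_Tproj sL dL] by blast
  have wb: "orthonormal_basis p w L" using ortho_onb[OF wo wL dL sL] .
  define \<sigma> where "\<sigma> l = norm (?T (w l))" for l
  define J where "J = {l\<in>{1..p}. \<sigma> l \<noteq> 0}"
  define y0 where "y0 l = ?T (w l) /\<^sub>R \<sigma> l" for l
  have oJ: "\<forall>i\<in>J. \<forall>k\<in>J. y0 i \<bullet> y0 k = (if i = k then 1 else 0)"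
  proof (intro ballI)
    fix i k assume i: "i \<in> J" and k: "k \<in> J"
    show "y0 i \<bullet> y0 k = (if i = k then 1 else 0)"
    proof (cases "i = k")
      case True
      then show ?thesis using i unfolding y0_def J_def \<sigma>_def
        by (simp add: dot_square_norm power2_eq_square)
    next
      case False
      then show ?thesis using i k wT unfolding y0_def J_def by auto
    qed
  qed
  have y0K: "\<forall>i\<in>J. y0 i \<in> K" unfolding y0_def using Tproj_in[OF g sK] sK by (simp add: subspace_scale)
  obtain y where yo: "ortho p y" and yK: "\<forall>i\<in>{1..p}. y i \<in> K" and yJ: "\<forall>i\<in>J. y i = y0 i"
    using ortho_extend[OF sK dK _ oJ y0K] unfolding J_def by blast
  have yb: "orthonormal_basis p y K" using ortho_onb[OF yo yK dK sK] .
  have Tw: "?T (w l) = \<sigma> l *\<^sub>R y l" if l: "l \<in> {1..p}" for l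
  proof (cases "\<sigma> l = 0")
    case True then show ?thesis unfolding \<sigma>_def by simp
  next
    case False
    then have "l \<in> J" using l unfolding J_def by simp
    then show ?thesis using yJ False unfolding y0_def by simp
  qed
  define U where "U i l = e i \<bullet> w l" for i l
  define V where "V k l = g k \<bullet> y l" for k l
  {
    have f1: "\<forall>j\<in>{1..p}. 0 \<le> \<sigma> j" unfolding \<sigma>_def by simp
    have f2: "\<forall>j. 1 \<le> j \<and> j < p \<longrightarrow> \<sigma> (j + 1) \<le> \<sigma> j" unfolding \<sigma>_def using wd by auto
    have f3: "\<forall>i\<in>{1..p}. \<forall>l\<in>{1..p}. (\<Sum>k = 1..p. U i k * U l k) = (if i = l then 1 else 0)"
    proof (intro ballI)
      fix i l assume i: "i \<in> {1..p}" and l: "l \<in> {1..p}"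
      have "(\<Sum>k = 1..p. U i k * U l k) = e i \<bullet> e l"
        unfolding U_def using onb_parseval[OF wb onb_in[OF e i], of "e l"] by simp
      then show "(\<Sum>k = 1..p. U i k * U l k) = (if i = l then 1 else 0)"
        using onb_ortho[OF e] i l unfolding ortho_def by simp
    qed
    have f4: "\<forall>i\<in>{1..p}. \<forall>l\<in>{1..p}. (\<Sum>k = 1..p. V i k * V l k) = (if i = l then 1 else 0)"
    proof (intro ballI)
      fix i l assume i: "i \<in> {1..p}" and l: "l \<in> {1..p}"
      have "(\<Sum>k = 1..p. V i k * V l k) = g i \<bullet> g l"
        unfolding V_def using onb_parseval[OF yb onb_in[OF g i], of "g l"] by simp
      then show "(\<Sum>k = 1..p. V i k * V l k) = (if i = l then 1 else 0)"
        using onb_ortho[OF g] i l unfolding ortho_def by simp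
    qed
    have f5: "\<forall>i\<in>{1..p}. \<forall>k\<in>{1..p}. e i \<bullet> g k = (\<Sum>l = 1..p. U i l * \<sigma> l * V k l)"
    proof (intro ballI)
      fix i k assume i: "i \<in> {1..p}" and k: "k \<in> {1..p}"
      have "e i \<bullet> g k = (\<Sum>l=1..p. (e i \<bullet> w l) * (g k \<bullet> w l))"
        using onb_parseval[OF wb onb_in[OF e i]] .
      also have "\<dots> = (\<Sum>l = 1..p. U i l * \<sigma> l * V k l)"
      proof (intro sum.cong refl)
        fix l assume l: "l \<in> {1..p}"
        have "g k \<bullet> w l = ?T (w l) \<bullet> g k"
          using Tproj_inner[OF g onb_in[OF g k]] by (simp add: inner_commute)
        also have "\<dots> = \<sigma> l * V k l" unfolding Tw[OF l] V_def by (simp add: inner_commute)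
        finally show "(e i \<bullet> w l) * (g k \<bullet> w l) = U i l * \<sigma> l * V k l" unfolding U_def by simp
      qed
      finally show "e i \<bullet> g k = (\<Sum>l = 1..p. U i l * \<sigma> l * V k l)" .
    qed
    then have ?thesis unfolding is_singular_values_def using f1 f2 f3 f4 by blast
  }
  then show ?thesis .
qed



lemma norm_ortho_sum:
  fixes z :: "nat \<Rightarrow> 'a::euclidean_space"
  assumes o: "ortho p z"
  shows "(norm (\<Sum>l=1..p. c l *\<^sub>R z l))\<^sup>2 = (\<Sum>l=1..p. (c l)\<^sup>2)"
proof -
  have "(norm (\<Sum>l=1..p. c l *\<^sub>R z l))\<^sup>2 = (\<Sum>l=1..p. \<Sum>m=1..p. c l * c m * (z l \<bullet> z m))"
    unfolding power2_norm_eq_inner by (simp add: inner_sum_left inner_sum_right sum_distrib_left mult.assoc inner_commute mult.left_commute)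
  also have "\<dots> = (\<Sum>l=1..p. \<Sum>m=1..p. (if l = m then 1 else 0) * (c l * c m))"
    using o unfolding ortho_def by (intro sum.cong refl) (simp add: mult.commute)
  also have "\<dots> = (\<Sum>l=1..p. (c l)\<^sup>2)"
  proof (intro sum.cong refl)
    fix l assume "l \<in> {1..p}"
    then show "(\<Sum>m=1..p. (if l = m then 1 else 0) * (c l * c m)) = (c l)\<^sup>2"
      using sum_kron[of l p "\<lambda>m. c l * c m"] by (simp add: power2_eq_square)
  qed
  finally show ?thesis .
qed

lemma col_ortho:
  fixes e :: "nat \<Rightarrow> 'a::euclidean_space" and U :: "nat \<Rightarrow> nat \<Rightarrow> real"
  assumes dL: "dim L = p" and e: "orthonormal_basis p e L" and sL: "subspace L"
    and U: "\<forall>i\<in>{1..p}. \<forall>l\<in>{1..p}. (\<Sum>k=1..p. U i k * U l k) = (if i = l then 1 else 0)"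
  shows "\<forall>k\<in>{1..p}. \<forall>m\<in>{1..p}. (\<Sum>i=1..p. U i k * U i m) = (if k = m then 1 else 0)"
proof (intro ballI)
  fix k m assume k: "k \<in> {1..p}" and m: "m \<in> {1..p}"
  have eo: "ortho p e" using onb_ortho[OF e] .
  define \<rho> where "\<rho> i = (\<Sum>k'=1..p. U i k' *\<^sub>R e k')" for i
  have \<rho>e: "\<rho> i \<bullet> e m' = U i m'" if m': "m' \<in> {1..p}" for i m'
  proof -
    have "\<rho> i \<bullet> e m' = (\<Sum>k'=1..p. U i k' * (if k' = m' then 1 else 0))"
      unfolding \<rho>_def inner_sum_left using eo m' unfolding ortho_def by (intro sum.cong refl) auto
    also have "\<dots> = U i m'" using m' by (rule sum_kron')
    finally show ?thesis .
  qed
  have \<rho>o: "ortho p \<rho>" unfolding ortho_def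
  proof (intro ballI)
    fix i l assume i: "i \<in> {1..p}" and l: "l \<in> {1..p}"
    have "\<rho> i \<bullet> \<rho> l = (\<Sum>k'=1..p. U i k' * (e k' \<bullet> \<rho> l))"
      unfolding \<rho>_def by (simp add: inner_sum_left)
    also have "\<dots> = (\<Sum>k'=1..p. U i k' * U l k')"
      using \<rho>e by (intro sum.cong refl) (simp add: inner_commute)
    finally show "\<rho> i \<bullet> \<rho> l = (if i = l then 1 else 0)" using U i l by simp
  qed
  have \<rho>L: "\<forall>i\<in>{1..p}. \<rho> i \<in> L" unfolding \<rho>_def using sL onb_in[OF e]
    by (auto intro!: subspace_sum subspace_scale)
  have "e k = (\<Sum>i=1..p. (e k \<bullet> \<rho> i) *\<^sub>R \<rho> i)" using ortho_expand[OF \<rho>o \<rho>L dL onb_in[OF e k]] .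
  then have "e k \<bullet> e m = (\<Sum>i=1..p. (e k \<bullet> \<rho> i) *\<^sub>R \<rho> i) \<bullet> e m"
    by (rule arg_cong[where f="\<lambda>v. v \<bullet> e m"])
  also have "\<dots> = (\<Sum>i=1..p. (e k \<bullet> \<rho> i) * (\<rho> i \<bullet> e m))"
    by (simp add: inner_sum_left)
  also have "\<dots> = (\<Sum>i=1..p. U i k * U i m)"
    using \<rho>e k m by (intro sum.cong refl) (simp add: inner_commute)
  finally show "(\<Sum>i=1..p. U i k * U i m) = (if k = m then 1 else 0)"
    using eo k m unfolding ortho_def by simp
qed

lemma cf_repr:
  fixes e g :: "nat \<Rightarrow> 'a::euclidean_space"
  assumes sL: "subspace L" and dL: "dim L = p" and e: "orthonormal_basis p e L"
    and sK: "subspace K" and dK: "dim K = p" and g: "orthonormal_basis p g K"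
    and sv: "is_singular_values p (\<lambda>i k. e i \<bullet> g k) \<sigma>"
  shows "\<exists>w. orthonormal_basis p w L \<and> (\<forall>x\<in>L. (norm (Tproj p g x))\<^sup>2 = (\<Sum>l=1..p. (x \<bullet> w l)\<^sup>2 * (\<sigma> l)\<^sup>2))"
proof -
  obtain U V :: "nat \<Rightarrow> nat \<Rightarrow> real" where
    Ur: "\<forall>i\<in>{1..p}. \<forall>l\<in>{1..p}. (\<Sum>k=1..p. U i k * U l k) = (if i = l then 1 else 0)" and
    Vr: "\<forall>i\<in>{1..p}. \<forall>l\<in>{1..p}. (\<Sum>k=1..p. V i k * V l k) = (if i = l then 1 else 0)" and
    C: "\<forall>i\<in>{1..p}. \<forall>k\<in>{1..p}. e i \<bullet> g k = (\<Sum>l=1..p. U i l * \<sigma> l * V k l)"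
    using sv unfolding is_singular_values_def by auto
  have Uc: "\<forall>k\<in>{1..p}. \<forall>m\<in>{1..p}. (\<Sum>i=1..p. U i k * U i m) = (if k = m then 1 else 0)"
    by (rule col_ortho[OF dL e sL Ur])
  have Vc: "\<forall>k\<in>{1..p}. \<forall>m\<in>{1..p}. (\<Sum>i=1..p. V i k * V i m) = (if k = m then 1 else 0)"
    by (rule col_ortho[OF dK g sK Vr])
  have eo: "ortho p e" using onb_ortho[OF e] .
  have go: "ortho p g" using onb_ortho[OF g] .
  define w where "w l = (\<Sum>i=1..p. U i l *\<^sub>R e i)" for l
  define z where "z l = (\<Sum>k=1..p. V k l *\<^sub>R g k)" for l
  have ew: "e i \<bullet> w m = U i m" if i: "i \<in> {1..p}" for i m
  proof -
    have "e i \<bullet> w m = (\<Sum>i'=1..p. (if i = i' then 1 else 0) * U i' m)"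
      unfolding w_def inner_sum_right using eo i unfolding ortho_def by (intro sum.cong refl) auto
    also have "\<dots> = U i m" using i by (rule sum_kron)
    finally show ?thesis .
  qed
  have gz: "g k \<bullet> z m = V k m" if k: "k \<in> {1..p}" for k m
  proof -
    have "g k \<bullet> z m = (\<Sum>i'=1..p. (if k = i' then 1 else 0) * V i' m)"
      unfolding z_def inner_sum_right using go k unfolding ortho_def by (intro sum.cong refl) auto
    also have "\<dots> = V k m" using k by (rule sum_kron)
    finally show ?thesis .
  qed
  have wo: "ortho p w" unfolding ortho_def
  proof (intro ballI)
    fix l m assume l: "l \<in> {1..p}" and m: "m \<in> {1..p}"
    have "w l \<bullet> w m = (\<Sum>i=1..p. U i l * (e i \<bullet> w m))"
      unfolding w_def[of l] by (simp add: inner_sum_left)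
    also have "\<dots> = (\<Sum>i=1..p. U i l * U i m)" using ew by (intro sum.cong refl) auto
    finally have "w l \<bullet> w m = (\<Sum>i=1..p. U i l * U i m)" .
    then show "w l \<bullet> w m = (if l = m then 1 else 0)" using Uc l m by simp
  qed
  have zo: "ortho p z" unfolding ortho_def
  proof (intro ballI)
    fix l m assume l: "l \<in> {1..p}" and m: "m \<in> {1..p}"
    have "z l \<bullet> z m = (\<Sum>i=1..p. V i l * (g i \<bullet> z m))"
      unfolding z_def[of l] by (simp add: inner_sum_left)
    also have "\<dots> = (\<Sum>i=1..p. V i l * V i m)" using gz by (intro sum.cong refl) auto
    finally have "z l \<bullet> z m = (\<Sum>i=1..p. V i l * V i m)" .
    then show "z l \<bullet> z m = (if l = m then 1 else 0)" using Vc l m by simp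
  qed
  have wL: "\<forall>i\<in>{1..p}. w i \<in> L" unfolding w_def using sL onb_in[OF e]
    by (auto intro!: subspace_sum subspace_scale)
  have wb: "orthonormal_basis p w L" by (rule ortho_onb[OF wo wL dL sL])
  have wg: "w l \<bullet> g k = \<sigma> l * V k l" if l: "l \<in> {1..p}" and k: "k \<in> {1..p}" for l k
  proof -
    have "w l \<bullet> g k = (\<Sum>i=1..p. U i l * (\<Sum>n=1..p. U i n * \<sigma> n * V k n))"
      unfolding w_def inner_sum_left using C k by (intro sum.cong refl) auto
    also have "\<dots> = (\<Sum>n=1..p. (\<Sum>i=1..p. U i l * U i n) * (\<sigma> n * V k n))"
      by (simp add: sum_distrib_left sum_distrib_right mult.assoc mult.left_commute) (rule sum.swap)
    also have "\<dots> = (\<Sum>n=1..p. (if l = n then 1 else 0) * (\<sigma> n * V k n))"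
      using Uc l by (intro sum.cong refl) auto
    also have "\<dots> = \<sigma> l * V k l" using l by (rule sum_kron)
    finally show ?thesis .
  qed
  have Tw: "Tproj p g (w l) = \<sigma> l *\<^sub>R z l" if l: "l \<in> {1..p}" for l
    unfolding Tproj_def z_def scaleR_sum_right using wg l by (intro sum.cong refl) auto
  have "(norm (Tproj p g x))\<^sup>2 = (\<Sum>l=1..p. (x \<bullet> w l)\<^sup>2 * (\<sigma> l)\<^sup>2)" if x: "x \<in> L" for x
  proof -
    have xe: "x = (\<Sum>l=1..p. (x \<bullet> w l) *\<^sub>R w l)" using onb_expand[OF wb x] .
    have "Tproj p g x = Tproj p g (\<Sum>l=1..p. (x \<bullet> w l) *\<^sub>R w l)"
      by (rule arg_cong[OF xe])
    also have "\<dots> = (\<Sum>l=1..p. Tproj p g ((x \<bullet> w l) *\<^sub>R w l))"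
      by (rule linear_sum[OF linear_Tproj])
    also have "\<dots> = (\<Sum>l=1..p. (x \<bullet> w l) *\<^sub>R Tproj p g (w l))"
      by (simp add: linear_scale[OF linear_Tproj])
    also have "\<dots> = (\<Sum>l=1..p. ((x \<bullet> w l) * \<sigma> l) *\<^sub>R z l)"
      using Tw by (intro sum.cong refl) auto
    finally have "(norm (Tproj p g x))\<^sup>2 = (\<Sum>l=1..p. ((x \<bullet> w l) * \<sigma> l)\<^sup>2)"
      using norm_ortho_sum[OF zo] by simp
    then show ?thesis by (simp add: power_mult_distrib)
  qed
  then show ?thesis using wb by blast
qed

lemma unit_in_int:
  fixes L :: "'a::euclidean_space set"
  assumes sS: "subspace S" and sW: "subspace W" and SL: "S \<subseteq> L" and WL: "W \<subseteq> L"
    and sL: "subspace L" and dL: "dim L = p" and d: "dim S + dim W > p"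
  shows "\<exists>x. x \<in> S \<and> x \<in> W \<and> norm x = 1"
proof -
  have "dim {x + y |x y. x \<in> S \<and> y \<in> W} + dim (S \<inter> W) = dim S + dim W"
    by (rule dim_sums_Int[OF sS sW])
  moreover have "{x + y |x y. x \<in> S \<and> y \<in> W} \<subseteq> L"
  proof
    fix z assume "z \<in> {x + y |x y. x \<in> S \<and> y \<in> W}"
    then obtain x y where "z = x + y" "x \<in> S" "y \<in> W" by blast
    then show "z \<in> L" using SL WL subspace_add[OF sL] by blast
  qed
  moreover have "dim {x + y |x y. x \<in> S \<and> y \<in> W} \<le> dim L" by (rule dim_subset) fact
  ultimately have "dim (S \<inter> W) \<noteq> 0" using d dL by linarith
  then have "\<not> S \<inter> W \<subseteq> {0}" using dim_eq_0[of "S \<inter> W"] by simp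
  then obtain x where x0: "x \<in> S \<inter> W" "x \<noteq> 0" by auto
  then have x: "x \<in> S" "x \<in> W" "x \<noteq> 0" by auto
  have "x /\<^sub>R norm x \<in> S" using subspace_scale[OF sS x(1)] .
  moreover have "x /\<^sub>R norm x \<in> W" using subspace_scale[OF sW x(2)] .
  moreover have "norm (x /\<^sub>R norm x) = 1" using x(3) by simp
  ultimately show ?thesis by blast
qed

lemma span_ortho_dim:
  fixes w :: "nat \<Rightarrow> 'a::euclidean_space"
  assumes wo: "ortho p w" and A: "A \<subseteq> {1..p}"
  shows "dim (span (w ` A)) = card A"
proof -
  have "independent (w ` A)" using independent_mono[OF ortho_indep[OF wo]] A by blast
  then have "dim (span (w ` A)) = card (w ` A)" by (simp add: dim_eq_card_independent)
  also have "\<dots> = card A" using inj_on_subset[OF ortho_inj[OF wo] A] by (simp add: card_image)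
  finally show ?thesis .
qed

lemma span_ortho_coeff:
  fixes w :: "nat \<Rightarrow> 'a::euclidean_space"
  assumes wo: "ortho p w" and A: "A \<subseteq> {1..p}" and x: "x \<in> span (w ` A)" and l: "l \<in> {1..p} - A"
  shows "x \<bullet> w l = 0"
proof -
  have "orthogonal (w l) x"
  proof (rule orthogonal_to_span[OF x])
    fix y assume "y \<in> w ` A"
    then obtain m where m: "m \<in> A" "y = w m" by blast
    then have "m \<noteq> l" using l by auto
    then show "orthogonal (w l) y" using wo m A l unfolding ortho_def orthogonal_def by auto
  qed
  then show ?thesis by (simp add: orthogonal_def inner_commute)
qed

lemma cf_lower:
  fixes e g :: "nat \<Rightarrow> 'a::euclidean_space"
  assumes sL: "subspace L" and dL: "dim L = p" and e: "orthonormal_basis p e L"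
    and sK: "subspace K" and dK: "dim K = p" and g: "orthonormal_basis p g K"
    and sv: "is_singular_values p (\<lambda>i k. e i \<bullet> g k) \<sigma>"
    and j: "j \<in> {1..p}" and sS: "subspace S" and SL: "S \<subseteq> L" and dS: "dim S \<ge> j"
  shows "\<exists>x\<in>S. norm x = 1 \<and> (norm (Tproj p g x))\<^sup>2 \<le> (\<sigma> j)\<^sup>2"
proof -
  obtain w where wb: "orthonormal_basis p w L"
    and rep: "\<forall>x\<in>L. (norm (Tproj p g x))\<^sup>2 = (\<Sum>l=1..p. (x \<bullet> w l)\<^sup>2 * (\<sigma> l)\<^sup>2)"
    using cf_repr[OF sL dL e sK dK g sv] by blast
  have wo: "ortho p w" using onb_ortho[OF wb] .
  have pos: "\<forall>j\<in>{1..p}. 0 \<le> \<sigma> j" and srt: "\<forall>j. 1 \<le> j \<and> j < p \<longrightarrow> \<sigma> (j + 1) \<le> \<sigma> j"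
    using sv unfolding is_singular_values_def by auto
  let ?W = "span (w ` {j..p})"
  have Ap: "{j..p} \<subseteq> {1..p}" using j by auto
  have dW: "dim ?W = p + 1 - j" using span_ortho_dim[OF wo Ap] by simp
  have WL: "?W \<subseteq> L" using onb_in[OF wb] Ap sL by (intro span_minimal) auto
  obtain x where xS: "x \<in> S" and xW: "x \<in> ?W" and x1: "norm x = 1"
  proof -
    have "dim S + dim ?W > p" using dS dW j by auto
    then show ?thesis using unit_in_int[OF sS subspace_span SL WL sL dL] that by blast
  qed
  have xL: "x \<in> L" using xS SL by auto
  have "(norm (Tproj p g x))\<^sup>2 = (\<Sum>l=1..p. (x \<bullet> w l)\<^sup>2 * (\<sigma> l)\<^sup>2)" using rep xL by blast
  also have "\<dots> \<le> (\<Sum>l=1..p. (x \<bullet> w l)\<^sup>2 * (\<sigma> j)\<^sup>2)"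
  proof (intro sum_mono)
    fix l assume l: "l \<in> {1..p}"
    show "(x \<bullet> w l)\<^sup>2 * (\<sigma> l)\<^sup>2 \<le> (x \<bullet> w l)\<^sup>2 * (\<sigma> j)\<^sup>2"
    proof (cases "l < j")
      case True
      then have "x \<bullet> w l = 0" using span_ortho_coeff[OF wo Ap xW] l by auto
      then show ?thesis by simp
    next
      case False
      then have "\<sigma> l \<le> \<sigma> j" using sorted_all[OF srt] l j by auto
      moreover have "0 \<le> \<sigma> l" using pos l by auto
      ultimately have "(\<sigma> l)\<^sup>2 \<le> (\<sigma> j)\<^sup>2" by (intro power_mono) auto
      then show ?thesis by (intro mult_left_mono) auto
    qed
  qed
  also have "\<dots> = (\<sigma> j)\<^sup>2 * (\<Sum>l=1..p. (x \<bullet> w l)\<^sup>2)" by (simp add: sum_distrib_left mult.commute)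
  also have "(\<Sum>l=1..p. (x \<bullet> w l)\<^sup>2) = x \<bullet> x"
    using onb_parseval[OF wb xL, of x] by (simp add: power2_eq_square)
  also have "x \<bullet> x = 1" using x1 by (simp add: dot_square_norm)
  finally show ?thesis using xS x1 by auto
qed

lemma cf_upper:
  fixes e g :: "nat \<Rightarrow> 'a::euclidean_space"
  assumes sL: "subspace L" and dL: "dim L = p" and e: "orthonormal_basis p e L"
    and sK: "subspace K" and dK: "dim K = p" and g: "orthonormal_basis p g K"
    and sv: "is_singular_values p (\<lambda>i k. e i \<bullet> g k) \<sigma>"
    and j: "j \<in> {1..p}" and sS: "subspace S" and SL: "S \<subseteq> L" and dS: "dim S \<ge> p + 1 - j"
  shows "\<exists>x\<in>S. norm x = 1 \<and> (\<sigma> j)\<^sup>2 \<le> (norm (Tproj p g x))\<^sup>2"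
proof -
  obtain w where wb: "orthonormal_basis p w L"
    and rep: "\<forall>x\<in>L. (norm (Tproj p g x))\<^sup>2 = (\<Sum>l=1..p. (x \<bullet> w l)\<^sup>2 * (\<sigma> l)\<^sup>2)"
    using cf_repr[OF sL dL e sK dK g sv] by blast
  have wo: "ortho p w" using onb_ortho[OF wb] .
  have pos: "\<forall>j\<in>{1..p}. 0 \<le> \<sigma> j" and srt: "\<forall>j. 1 \<le> j \<and> j < p \<longrightarrow> \<sigma> (j + 1) \<le> \<sigma> j"
    using sv unfolding is_singular_values_def by auto
  let ?W = "span (w ` {1..j})"
  have Ap: "{1..j} \<subseteq> {1..p}" using j by auto
  have dW: "dim ?W = j" using span_ortho_dim[OF wo Ap] by simp
  have WL: "?W \<subseteq> L" using onb_in[OF wb] Ap sL by (intro span_minimal) auto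
  obtain x where xS: "x \<in> S" and xW: "x \<in> ?W" and x1: "norm x = 1"
  proof -
    have "dim S + dim ?W > p" using dS dW j by auto
    then show ?thesis using unit_in_int[OF sS subspace_span SL WL sL dL] that by blast
  qed
  have xL: "x \<in> L" using xS SL by auto
  have "x \<bullet> x = 1" using x1 by (simp add: dot_square_norm)
  also have "x \<bullet> x = (\<Sum>l=1..p. (x \<bullet> w l)\<^sup>2)"
    using onb_parseval[OF wb xL, of x] by (simp add: power2_eq_square)
  finally have "(\<sigma> j)\<^sup>2 = (\<sigma> j)\<^sup>2 * (\<Sum>l=1..p. (x \<bullet> w l)\<^sup>2)" by simp
  also have "\<dots> = (\<Sum>l=1..p. (x \<bullet> w l)\<^sup>2 * (\<sigma> j)\<^sup>2)" by (simp add: sum_distrib_left mult.commute)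
  also have "\<dots> \<le> (\<Sum>l=1..p. (x \<bullet> w l)\<^sup>2 * (\<sigma> l)\<^sup>2)"
  proof (intro sum_mono)
    fix l assume l: "l \<in> {1..p}"
    show "(x \<bullet> w l)\<^sup>2 * (\<sigma> j)\<^sup>2 \<le> (x \<bullet> w l)\<^sup>2 * (\<sigma> l)\<^sup>2"
    proof (cases "j < l")
      case True
      then have "x \<bullet> w l = 0" using span_ortho_coeff[OF wo Ap xW] l by auto
      then show ?thesis by simp
    next
      case False
      then have "\<sigma> j \<le> \<sigma> l" using sorted_all[OF srt] l j by auto
      moreover have "0 \<le> \<sigma> j" using pos j by auto
      ultimately have "(\<sigma> j)\<^sup>2 \<le> (\<sigma> l)\<^sup>2" by (intro power_mono) auto
      then show ?thesis by (intro mult_left_mono) auto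
    qed
  qed
  also have "\<dots> = (norm (Tproj p g x))\<^sup>2" using rep xL by simp
  finally show ?thesis using xS x1 by auto
qed



lemma real_lower_aux:
  fixes a b c N :: real
  assumes ac: "a + c > 0" and h: "(a + b)\<^sup>2 \<le> N * (a + c)"
  shows "a + 2 * b - c \<le> N"
proof -
  have "(a + 2 * b - c) * (a + c) \<le> (a + b)\<^sup>2"
  proof -
    have "(a + b)\<^sup>2 - (a + 2 * b - c) * (a + c) = (b - c)\<^sup>2" by (simp add: power2_eq_square algebra_simps)
    then show ?thesis by (smt (verit) zero_le_power2)
  qed
  also have "\<dots> \<le> N * (a + c)" by (rule h)
  finally show ?thesis using ac by (simp add: mult_le_cancel_right_pos)
qed

lemma orth_compD: "v \<in> orthogonal_comp M \<Longrightarrow> u \<in> M \<Longrightarrow> u \<bullet> v = 0"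
  unfolding orthogonal_comp_def orthogonal_def by auto

lemma n_orth:
  assumes f: "orthonormal_basis p f M" and u: "u \<in> M"
  shows "(x - Tproj p f x) \<bullet> u = 0"
  using Tproj_inner[OF f u] by (simp add: inner_diff_left)

lemma graph_lower:
  fixes A :: "'a::euclidean_space \<Rightarrow> 'a"
  assumes sM: "subspace M" and f: "orthonormal_basis p f M"
    and AM: "\<forall>u\<in>M. A u \<in> orthogonal_comp M"
    and K: "K = {u + A u | u. u \<in> M}" and g: "orthonormal_basis q g K"
  shows "(norm (Tproj p f x))\<^sup>2 + 2 * ((x - Tproj p f x) \<bullet> A (Tproj p f x)) - (norm (A (Tproj p f x)))\<^sup>2
         \<le> (norm (Tproj q g x))\<^sup>2"
proof -
  define m where "m = Tproj p f x"
  define n where "n = x - m"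
  have mM: "m \<in> M" unfolding m_def by (rule Tproj_in[OF f sM])
  have mAm: "m \<bullet> A m = 0" using orth_compD AM mM by blast
  have nm: "n \<bullet> m = 0" using n_orth[OF f mM, of x] unfolding n_def m_def by simp
  define y where "y = m + A m"
  have yK: "y \<in> K" unfolding K y_def using mM by blast
  have xy: "Tproj q g x \<bullet> y = (norm m)\<^sup>2 + n \<bullet> A m"
  proof -
    have "Tproj q g x \<bullet> y = x \<bullet> y" by (rule Tproj_inner[OF g yK])
    also have "x \<bullet> y = (m + n) \<bullet> (m + A m)" unfolding n_def y_def by simp
    also have "\<dots> = (norm m)\<^sup>2 + n \<bullet> A m" using mAm nm
      by (simp add: inner_add_left inner_add_right power2_norm_eq_inner inner_commute)
    finally show ?thesis .
  qed
  have yy: "(norm y)\<^sup>2 = (norm m)\<^sup>2 + (norm (A m))\<^sup>2"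
    unfolding y_def power2_norm_eq_inner using mAm by (simp add: inner_add_left inner_add_right inner_commute)
  have cs: "(Tproj q g x \<bullet> y)\<^sup>2 \<le> (norm (Tproj q g x))\<^sup>2 * (norm y)\<^sup>2"
  proof -
    have "\<bar>Tproj q g x \<bullet> y\<bar> \<le> norm (Tproj q g x) * norm y" by (rule Cauchy_Schwarz_ineq2)
    then have "\<bar>Tproj q g x \<bullet> y\<bar>\<^sup>2 \<le> (norm (Tproj q g x) * norm y)\<^sup>2" by (intro power_mono) auto
    then show ?thesis by (simp add: power_mult_distrib)
  qed
  show ?thesis
  proof (cases "(norm m)\<^sup>2 + (norm (A m))\<^sup>2 > 0")
    case True
    have "(norm m)\<^sup>2 + 2 * (n \<bullet> A m) - (norm (A m))\<^sup>2 \<le> (norm (Tproj q g x))\<^sup>2"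
      by (rule real_lower_aux[OF True]) (use cs xy yy in simp)
    then show ?thesis unfolding m_def n_def .
  next
    case False
    then have "(norm m)\<^sup>2 = 0" "(norm (A m))\<^sup>2 = 0"
      by (smt (verit) zero_le_power2)+
    then have "A m = 0" "m = 0" by auto
    then show ?thesis unfolding m_def n_def by simp
  qed
qed

lemma graph_upper:
  fixes A :: "'a::euclidean_space \<Rightarrow> 'a"
  assumes sM: "subspace M" and f: "orthonormal_basis p f M" and A: "linear A"
    and AM: "\<forall>u\<in>M. A u \<in> orthogonal_comp M"
    and K: "K = {u + A u | u. u \<in> M}" and sK: "subspace K" and g: "orthonormal_basis q g K"
  shows "(norm (Tproj q g x))\<^sup>2 \<le> (norm (Tproj p f x))\<^sup>2 + 2 * ((x - Tproj p f x) \<bullet> A (Tproj p f x))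
          + (\<Sum>k=1..p. ((x - Tproj p f x) \<bullet> A (f k))\<^sup>2)"
proof -
  define m where "m = Tproj p f x"
  define n where "n = x - m"
  define As where "As = (\<Sum>k=1..p. (n \<bullet> A (f k)) *\<^sub>R f k)"
  have mM: "m \<in> M" unfolding m_def by (rule Tproj_in[OF f sM])
  have fo: "ortho p f" by (rule onb_ortho[OF f])
  let ?t = "Tproj q g x"
  have tK: "?t \<in> K" by (rule Tproj_in[OF g sK])
  then obtain u where uM: "u \<in> M" and tu: "?t = u + A u" unfolding K by blast
  have uAu: "u \<bullet> A u = 0" using orth_compD AM uM by blast
  have nu: "n \<bullet> u = 0" unfolding n_def m_def by (rule n_orth[OF f uM])
  have mAu: "m \<bullet> A u = 0" using orth_compD AM mM uM by blast
  have Au: "A u = (\<Sum>k=1..p. (u \<bullet> f k) *\<^sub>R A (f k))"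
  proof -
    have "A u = A (\<Sum>k=1..p. (u \<bullet> f k) *\<^sub>R f k)" using onb_expand[OF f uM] by metis
    also have "\<dots> = (\<Sum>k=1..p. (u \<bullet> f k) *\<^sub>R A (f k))" by (simp add: linear_sum[OF A] linear_scale[OF A])
    finally show ?thesis .
  qed
  have nAu: "n \<bullet> A u = As \<bullet> u"
    unfolding Au As_def by (simp add: inner_sum_left inner_sum_right inner_commute mult.commute)
  have t2: "(norm ?t)\<^sup>2 = (m + As) \<bullet> u"
  proof -
    have "(norm ?t)\<^sup>2 = x \<bullet> ?t" by (rule Tproj_norm2[OF g sK])
    also have "x \<bullet> ?t = (m + n) \<bullet> (u + A u)" using tu unfolding n_def by simp
    also have "\<dots> = (m + As) \<bullet> u" using nu mAu nAu
      by (simp add: inner_add_left inner_add_right inner_commute)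
    finally show ?thesis .
  qed
  have ut: "norm u \<le> norm ?t"
  proof -
    have "(norm ?t)\<^sup>2 = (norm u)\<^sup>2 + (norm (A u))\<^sup>2"
      unfolding tu power2_norm_eq_inner using uAu by (simp add: inner_add_left inner_add_right inner_commute)
    then have "(norm u)\<^sup>2 \<le> (norm ?t)\<^sup>2" by simp
    then show ?thesis using power2_le_imp_le by auto
  qed
  have tle: "norm ?t \<le> norm (m + As)"
  proof (cases "norm ?t = 0")
    case True then show ?thesis by simp
  next
    case False
    have "(norm ?t)\<^sup>2 \<le> norm (m + As) * norm u" using t2 norm_cauchy_schwarz by metis
    also have "\<dots> \<le> norm (m + As) * norm ?t" using ut by (intro mult_left_mono) auto
    finally have "norm ?t * norm ?t \<le> norm (m + As) * norm ?t" by (simp add: power2_eq_square)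
    then show ?thesis using False by (simp add: mult_le_cancel_right)
  qed
  then have "(norm ?t)\<^sup>2 \<le> (norm (m + As))\<^sup>2" by (intro power_mono) auto
  also have "(norm (m + As))\<^sup>2 = (norm m)\<^sup>2 + 2 * (m \<bullet> As) + (norm As)\<^sup>2"
    unfolding power2_norm_eq_inner by (simp add: inner_add_left inner_add_right inner_commute)
  also have "m \<bullet> As = n \<bullet> A m"
  proof -
    have mf: "m \<bullet> f k = x \<bullet> f k" if "k \<in> {1..p}" for k
      unfolding m_def by (rule Tproj_inner[OF f onb_in[OF f that]])
    have "A m = (\<Sum>k=1..p. (x \<bullet> f k) *\<^sub>R A (f k))"
      unfolding m_def Tproj_def by (simp add: linear_sum[OF A] linear_scale[OF A])
    then have "n \<bullet> A m = (\<Sum>k=1..p. (x \<bullet> f k) * (n \<bullet> A (f k)))" by (simp add: inner_sum_right)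
    moreover have "m \<bullet> As = (\<Sum>k=1..p. (n \<bullet> A (f k)) * (m \<bullet> f k))"
      unfolding As_def by (simp add: inner_sum_right)
    ultimately show ?thesis using mf by (simp add: mult.commute)
  qed
  also have "(norm As)\<^sup>2 = (\<Sum>k=1..p. (n \<bullet> A (f k))\<^sup>2)"
    unfolding As_def by (rule norm_ortho_sum[OF fo])
  finally show ?thesis unfolding m_def n_def .
qed



lemma A_m_bound:
  fixes A :: "'a::euclidean_space \<Rightarrow> 'a"
  assumes f: "orthonormal_basis p f M" and A: "linear A"
  shows "norm (A (Tproj p f v)) \<le> (\<Sum>k=1..p. norm (A (f k))) * norm v"
proof -
  have fo: "ortho p f" by (rule onb_ortho[OF f])
  have "A (Tproj p f v) = (\<Sum>k=1..p. (v \<bullet> f k) *\<^sub>R A (f k))"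
    unfolding Tproj_def by (simp add: linear_sum[OF A] linear_scale[OF A])
  then have "norm (A (Tproj p f v)) \<le> (\<Sum>k=1..p. norm ((v \<bullet> f k) *\<^sub>R A (f k)))"
    using norm_sum by metis
  also have "\<dots> \<le> (\<Sum>k=1..p. norm v * norm (A (f k)))"
  proof (intro sum_mono)
    fix k assume k: "k \<in> {1..p}"
    have fk: "norm (f k) = 1" using fo k unfolding ortho_def by (simp add: norm_eq_sqrt_inner)
    have "\<bar>v \<bullet> f k\<bar> \<le> norm v" using Cauchy_Schwarz_ineq2[of v "f k"] fk by simp
    then show "norm ((v \<bullet> f k) *\<^sub>R A (f k)) \<le> norm v * norm (A (f k))"
      by (simp add: mult_right_mono)
  qed
  also have "\<dots> = (\<Sum>k=1..p. norm (A (f k))) * norm v" by (simp add: sum_distrib_left mult.commute)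
  finally show ?thesis .
qed

lemma n_norm_le:
  assumes f: "orthonormal_basis p f M" and sM: "subspace M"
  shows "norm (x - Tproj p f x) \<le> norm x"
proof -
  have mM: "Tproj p f x \<in> M" by (rule Tproj_in[OF f sM])
  have o: "(x - Tproj p f x) \<bullet> Tproj p f x = 0" by (rule n_orth[OF f mM])
  have "(norm x)\<^sup>2 = (norm (Tproj p f x + (x - Tproj p f x)))\<^sup>2" by simp
  also have "\<dots> = (norm (Tproj p f x))\<^sup>2 + (norm (x - Tproj p f x))\<^sup>2"
    unfolding power2_norm_eq_inner using o
    by (simp only: inner_add_left inner_add_right inner_commute[of "Tproj p f x" "x - Tproj p f x"])
  finally have "(norm (x - Tproj p f x))\<^sup>2 \<le> (norm x)\<^sup>2" by simp
  then show ?thesis using power2_le_imp_le by auto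
qed

lemma sum_sq_le_sq_sum:
  fixes a :: "nat \<Rightarrow> real"
  assumes "\<forall>k\<in>S. a k \<ge> 0" "finite S"
  shows "(\<Sum>k\<in>S. (a k)\<^sup>2) \<le> (\<Sum>k\<in>S. a k)\<^sup>2"
proof -
  have "(\<Sum>k\<in>S. (a k)\<^sup>2) \<le> (\<Sum>k\<in>S. a k * (\<Sum>k\<in>S. a k))"
  proof (intro sum_mono)
    fix k assume k: "k \<in> S"
    have "a k \<le> (\<Sum>k\<in>S. a k)" using member_le_sum[of k S a] assms k by auto
    then show "(a k)\<^sup>2 \<le> a k * (\<Sum>k\<in>S. a k)" using assms k by (simp add: power2_eq_square mult_left_mono)
  qed
  also have "\<dots> = (\<Sum>k\<in>S. a k)\<^sup>2" by (simp add: sum_distrib_right power2_eq_square)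
  finally show ?thesis .
qed

lemma nA_sum_bound:
  fixes A :: "'a::euclidean_space \<Rightarrow> 'a"
  assumes f: "orthonormal_basis p f M" and sM: "subspace M"
  shows "(\<Sum>k=1..p. ((x - Tproj p f x) \<bullet> A (f k))\<^sup>2) \<le> (\<Sum>k=1..p. norm (A (f k)))\<^sup>2 * (norm x)\<^sup>2"
proof -
  have "(\<Sum>k=1..p. ((x - Tproj p f x) \<bullet> A (f k))\<^sup>2) \<le> (\<Sum>k=1..p. (norm (A (f k)))\<^sup>2 * (norm x)\<^sup>2)"
  proof (intro sum_mono)
    fix k
    have "\<bar>(x - Tproj p f x) \<bullet> A (f k)\<bar> \<le> norm (x - Tproj p f x) * norm (A (f k))"
      by (rule Cauchy_Schwarz_ineq2)
    also have "\<dots> \<le> norm x * norm (A (f k))" using n_norm_le[OF f sM] by (intro mult_right_mono) auto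
    finally have "\<bar>(x - Tproj p f x) \<bullet> A (f k)\<bar>\<^sup>2 \<le> (norm x * norm (A (f k)))\<^sup>2"
      by (intro power_mono) auto
    then show "((x - Tproj p f x) \<bullet> A (f k))\<^sup>2 \<le> (norm (A (f k)))\<^sup>2 * (norm x)\<^sup>2"
      by (simp add: power_mult_distrib mult.commute)
  qed
  also have "\<dots> = (\<Sum>k=1..p. (norm (A (f k)))\<^sup>2) * (norm x)\<^sup>2" by (simp add: sum_distrib_right)
  also have "\<dots> \<le> (\<Sum>k=1..p. norm (A (f k)))\<^sup>2 * (norm x)\<^sup>2"
    by (intro mult_right_mono sum_sq_le_sq_sum) auto
  finally show ?thesis .
qed

lemma graph_est:
  fixes A :: "'a::euclidean_space \<Rightarrow> 'a"
  assumes sM: "subspace M" and f: "orthonormal_basis p f M" and A: "linear A"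
    and AM: "\<forall>u\<in>M. A u \<in> orthogonal_comp M"
    and K: "K = {u + A u | u. u \<in> M}" and sK: "subspace K" and g: "orthonormal_basis q g K"
  shows "\<bar>(norm (Tproj q g x))\<^sup>2 - ((norm (Tproj p f x))\<^sup>2 + 2 * ((x - Tproj p f x) \<bullet> A (Tproj p f x)))\<bar>
      \<le> (\<Sum>k=1..p. norm (A (f k)))\<^sup>2 * (norm x)\<^sup>2"
proof -
  let ?b = "(\<Sum>k=1..p. norm (A (f k)))"
  have lo: "(norm (Tproj p f x))\<^sup>2 + 2 * ((x - Tproj p f x) \<bullet> A (Tproj p f x)) - (norm (A (Tproj p f x)))\<^sup>2
         \<le> (norm (Tproj q g x))\<^sup>2" by (rule graph_lower[OF sM f AM K g])
  have up: "(norm (Tproj q g x))\<^sup>2 \<le> (norm (Tproj p f x))\<^sup>2 + 2 * ((x - Tproj p f x) \<bullet> A (Tproj p f x))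
          + (\<Sum>k=1..p. ((x - Tproj p f x) \<bullet> A (f k))\<^sup>2)" by (rule graph_upper[OF sM f A AM K sK g])
  have b1: "(norm (A (Tproj p f x)))\<^sup>2 \<le> ?b\<^sup>2 * (norm x)\<^sup>2"
  proof -
    have "norm (A (Tproj p f x)) \<le> ?b * norm x" by (rule A_m_bound[OF f A])
    then have "(norm (A (Tproj p f x)))\<^sup>2 \<le> (?b * norm x)\<^sup>2" by (intro power_mono) auto
    then show ?thesis by (simp add: power_mult_distrib)
  qed
  have b2: "(\<Sum>k=1..p. ((x - Tproj p f x) \<bullet> A (f k))\<^sup>2) \<le> ?b\<^sup>2 * (norm x)\<^sup>2"
    by (rule nA_sum_bound[OF f sM])
  show ?thesis using lo up b1 b2 by linarith
qed



definition Bf :: "nat \<Rightarrow> (nat \<Rightarrow> 'a::euclidean_space) \<Rightarrow> ('a \<Rightarrow> 'a) \<Rightarrow> 'a \<Rightarrow> 'a \<Rightarrow> real" where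
  "Bf p f A u v = (u - Tproj p f u) \<bullet> A (Tproj p f v)"

lemma Bf_bound:
  assumes f: "orthonormal_basis p f M" and sM: "subspace M" and A: "linear A"
  shows "\<bar>Bf p f A u v\<bar> \<le> (\<Sum>k=1..p. norm (A (f k))) * norm u * norm v"
proof -
  have "\<bar>Bf p f A u v\<bar> \<le> norm (u - Tproj p f u) * norm (A (Tproj p f v))"
    unfolding Bf_def by (rule Cauchy_Schwarz_ineq2)
  also have "\<dots> \<le> norm u * ((\<Sum>k=1..p. norm (A (f k))) * norm v)"
    by (intro mult_mono n_norm_le[OF f sM] A_m_bound[OF f A]) auto
  finally show ?thesis by (simp add: mult.commute mult.left_commute)
qed

lemma Bf_expand:
  assumes A: "linear A"
  shows "Bf p f A (t *\<^sub>R a + y) (t *\<^sub>R a + y) =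
     t\<^sup>2 * Bf p f A a a + t * Bf p f A a y + t * Bf p f A y a + Bf p f A y y"
  unfolding Bf_def
  by (simp add: linear_add[OF linear_Tproj] linear_scale[OF linear_Tproj] linear_add[OF A] linear_scale[OF A]
      inner_add_left inner_add_right inner_diff_left power2_eq_square algebra_simps)

lemma abs_mult_le1: "\<bar>t\<bar> \<le> 1 \<Longrightarrow> \<bar>z\<bar> \<le> w \<Longrightarrow> \<bar>t * (z::real)\<bar> \<le> w"
  by (simp add: abs_mult) (metis abs_ge_zero dual_order.trans mult_left_le_one_le mult.commute mult_mono)

lemma sq_complete: "(g::real) > 0 \<Longrightarrow> - 8 * b\<^sup>2 / g \<le> (g / 2) * u\<^sup>2 - 4 * b * u"
proof -
  assume g: "g > 0"
  have "0 \<le> (g / 2) * (u - 4 * b / g)\<^sup>2" using g by simp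
  also have "(g / 2) * (u - 4 * b / g)\<^sup>2 = (g / 2) * u\<^sup>2 - 4 * b * u + 8 * b\<^sup>2 / g"
    using g by (simp add: power2_eq_square field_simps)
  finally show ?thesis by simp
qed

context
  fixes L M :: "'a::euclidean_space set" and p :: nat and e f :: "nat \<Rightarrow> 'a" and c :: "nat \<Rightarrow> real"
    and A :: "'a \<Rightarrow> 'a"
  assumes sL: "subspace L" and dL: "dim L = p" and e: "orthonormal_basis p e L"
    and sM: "subspace M" and f: "orthonormal_basis p f M"
    and ef: "\<forall>i\<in>{1..p}. \<forall>k\<in>{1..p}. i \<noteq> k \<longrightarrow> e i \<bullet> f k = 0"
    and efc: "\<forall>k\<in>{1..p}. e k \<bullet> f k = c k"
    and A: "linear A"
begin

lemma yf:
  assumes y: "y \<in> L" and k: "k \<in> {1..p}"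
  shows "y \<bullet> f k = (y \<bullet> e k) * c k"
proof -
  have "y \<bullet> f k = (\<Sum>i=1..p. (y \<bullet> e i) *\<^sub>R e i) \<bullet> f k" using onb_expand[OF e y] by metis
  also have "\<dots> = (\<Sum>i=1..p. (if k = i then 1 else 0) * ((y \<bullet> e i) * c k))"
    unfolding inner_sum_left using ef efc k by (intro sum.cong refl) auto
  also have "\<dots> = (y \<bullet> e k) * c k" using k by (rule sum_kron)
  finally show ?thesis .
qed

lemma my2:
  assumes y: "y \<in> L"
  shows "(norm (Tproj p f y))\<^sup>2 = (\<Sum>k=1..p. (y \<bullet> e k)\<^sup>2 * (c k)\<^sup>2)"
proof -
  have "(norm (Tproj p f y))\<^sup>2 = (\<Sum>k=1..p. (y \<bullet> f k)\<^sup>2)"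
    unfolding Tproj_def by (rule norm_ortho_sum[OF onb_ortho[OF f]])
  also have "\<dots> = (\<Sum>k=1..p. (y \<bullet> e k)\<^sup>2 * (c k)\<^sup>2)"
    using yf[OF y] by (intro sum.cong refl) (simp add: power_mult_distrib)
  finally show ?thesis .
qed

lemma mej:
  assumes j: "j \<in> {1..p}"
  shows "Tproj p f (e j) = c j *\<^sub>R f j"
proof -
  have "Tproj p f (e j) = (\<Sum>k=1..p. (if j = k then c j *\<^sub>R f j else 0))"
    unfolding Tproj_def using ef efc j by (intro sum.cong refl) auto
  also have "\<dots> = c j *\<^sub>R f j" using j by (simp add: sum.delta)
  finally show ?thesis .
qed

lemma quad_common:
  assumes j: "j \<in> {1..p}" and x: "x \<in> L" and x1: "norm x = 1"
  defines "\<beta> \<equiv> (\<Sum>k=1..p. norm (A (f k)))"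
  shows "\<exists>t y u. t\<^sup>2 + u\<^sup>2 = 1 \<and> u \<ge> 0 \<and>
     (norm (Tproj p f x))\<^sup>2 = t\<^sup>2 * (c j)\<^sup>2 + (\<Sum>k=1..p. (y \<bullet> e k)\<^sup>2 * (c k)\<^sup>2) \<and>
     (\<Sum>k=1..p. (y \<bullet> e k)\<^sup>2) = u\<^sup>2 \<and> y \<bullet> e j = 0 \<and> (\<forall>k\<in>{1..p}. k \<noteq> j \<longrightarrow> y \<bullet> e k = x \<bullet> e k) \<and>
     \<bar>Bf p f A x x - Bf p f A (e j) (e j)\<bar> \<le> 2 * \<beta> * u\<^sup>2 + 2 * \<beta> * u"
proof -
  have eo: "ortho p e" by (rule onb_ortho[OF e])
  have ejj: "e j \<bullet> e j = 1" using eo j unfolding ortho_def by auto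
  have ej1: "norm (e j) = 1" using ejj by (simp add: norm_eq_sqrt_inner)
  have ejL: "e j \<in> L" by (rule onb_in[OF e j])
  define t where "t = x \<bullet> e j"
  define y where "y = x - t *\<^sub>R e j"
  define u where "u = norm y"
  have xty: "x = t *\<^sub>R e j + y" unfolding y_def by simp
  have yL: "y \<in> L" unfolding y_def using x ejL sL by (simp add: subspace_diff subspace_scale)
  have yej: "y \<bullet> e j = 0" unfolding y_def t_def using ejj by (simp add: inner_diff_left)
  have yek: "y \<bullet> e k = x \<bullet> e k" if "k \<in> {1..p}" "k \<noteq> j" for k
    unfolding y_def using eo that j unfolding ortho_def by (simp add: inner_diff_left)
  have tu: "t\<^sup>2 + u\<^sup>2 = 1"
  proof -
    have "1 = x \<bullet> x" using x1 by (simp add: dot_square_norm)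
    also have "\<dots> = t\<^sup>2 + y \<bullet> y" unfolding xty using yej ejj
      by (simp add: inner_add_left inner_add_right inner_commute power2_eq_square)
    finally show ?thesis unfolding u_def by (simp add: dot_square_norm)
  qed
  have t1: "\<bar>t\<bar> \<le> 1"
  proof -
    have "t\<^sup>2 \<le> 1" using tu by (smt (verit) zero_le_power2)
    then show ?thesis by (simp add: abs_square_le_1)
  qed
  have fj: "f j \<bullet> f j = 1" using onb_ortho[OF f] j unfolding ortho_def by auto
  have myfj: "Tproj p f y \<bullet> f j = 0"
    using Tproj_inner[OF f onb_in[OF f j], of y] yf[OF yL j] yej by simp
  have mx: "(norm (Tproj p f x))\<^sup>2 = t\<^sup>2 * (c j)\<^sup>2 + (\<Sum>k=1..p. (y \<bullet> e k)\<^sup>2 * (c k)\<^sup>2)"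
  proof -
    have "Tproj p f x = (t * c j) *\<^sub>R f j + Tproj p f y"
      unfolding xty by (simp add: linear_add[OF linear_Tproj] linear_scale[OF linear_Tproj] mej[OF j])
    then have "(norm (Tproj p f x))\<^sup>2 = (t * c j)\<^sup>2 + (norm (Tproj p f y))\<^sup>2"
      unfolding power2_norm_eq_inner using fj myfj
      by (simp add: inner_add_left inner_add_right inner_commute power2_eq_square)
    then show ?thesis using my2[OF yL] by (simp add: power_mult_distrib)
  qed
  have sy: "(\<Sum>k=1..p. (y \<bullet> e k)\<^sup>2) = u\<^sup>2"
    using onb_parseval[OF e yL, of y] unfolding u_def by (simp add: power2_eq_square dot_square_norm)
  have Bb: "\<bar>Bf p f A a b\<bar> \<le> \<beta> * norm a * norm b" for a b
    unfolding \<beta>_def by (rule Bf_bound[OF f sM A])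
  have bpos: "\<beta> \<ge> 0" unfolding \<beta>_def by (simp add: sum_nonneg)
  have e1: "\<bar>(t\<^sup>2 - 1) * Bf p f A (e j) (e j)\<bar> \<le> \<beta> * u\<^sup>2"
  proof -
    have "t\<^sup>2 - 1 = - u\<^sup>2" using tu by simp
    then have "\<bar>(t\<^sup>2 - 1) * Bf p f A (e j) (e j)\<bar> = u\<^sup>2 * \<bar>Bf p f A (e j) (e j)\<bar>" by (simp add: abs_mult)
    also have "\<dots> \<le> u\<^sup>2 * \<beta>" using Bb[of "e j" "e j"] ej1 by (intro mult_left_mono) auto
    finally show ?thesis by (simp add: mult.commute)
  qed
  have e2: "\<bar>t * Bf p f A (e j) y\<bar> \<le> \<beta> * u"
    using abs_mult_le1[OF t1, of "Bf p f A (e j) y" "\<beta> * u"] Bb[of "e j" y] ej1 unfolding u_def by simp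
  have e3: "\<bar>t * Bf p f A y (e j)\<bar> \<le> \<beta> * u"
    using abs_mult_le1[OF t1, of "Bf p f A y (e j)" "\<beta> * u"] Bb[of y "e j"] ej1 unfolding u_def by simp
  have e4: "\<bar>Bf p f A y y\<bar> \<le> \<beta> * u\<^sup>2"
    using Bb[of y y] unfolding u_def by (simp add: power2_eq_square mult.assoc)
  have "Bf p f A x x - Bf p f A (e j) (e j) =
      (t\<^sup>2 - 1) * Bf p f A (e j) (e j) + t * Bf p f A (e j) y + t * Bf p f A y (e j) + Bf p f A y y"
    unfolding xty Bf_expand[OF A] by (simp add: algebra_simps)
  then have "\<bar>Bf p f A x x - Bf p f A (e j) (e j)\<bar> \<le> 2 * \<beta> * u\<^sup>2 + 2 * \<beta> * u"
    using e1 e2 e3 e4 by linarith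
  then show ?thesis using tu mx sy yej yek unfolding u_def
    by (intro exI[of _ t] exI[of _ y] exI[of _ "norm y"]) auto
qed


lemma quad_lower:
  assumes j: "j \<in> {1..p}" and g: "g > 0"
    and gap: "\<forall>k\<in>{1..p}. k < j \<longrightarrow> (c j)\<^sup>2 + g \<le> (c k)\<^sup>2"
    and small: "8 * (\<Sum>k=1..p. norm (A (f k))) \<le> g"
    and x: "x \<in> L" and x1: "norm x = 1" and xz: "\<forall>k\<in>{1..p}. j < k \<longrightarrow> x \<bullet> e k = 0"
  shows "(c j)\<^sup>2 + 2 * Bf p f A (e j) (e j) - 8 * (\<Sum>k=1..p. norm (A (f k)))\<^sup>2 / g
         \<le> (norm (Tproj p f x))\<^sup>2 + 2 * Bf p f A x x"
proof -
  define \<beta> where "\<beta> = (\<Sum>k=1..p. norm (A (f k)))"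
  obtain t y u where tu: "t\<^sup>2 + u\<^sup>2 = 1" and u0: "u \<ge> 0"
    and mx: "(norm (Tproj p f x))\<^sup>2 = t\<^sup>2 * (c j)\<^sup>2 + (\<Sum>k=1..p. (y \<bullet> e k)\<^sup>2 * (c k)\<^sup>2)"
    and sy: "(\<Sum>k=1..p. (y \<bullet> e k)\<^sup>2) = u\<^sup>2" and yej: "y \<bullet> e j = 0"
    and yek: "\<forall>k\<in>{1..p}. k \<noteq> j \<longrightarrow> y \<bullet> e k = x \<bullet> e k"
    and Bd: "\<bar>Bf p f A x x - Bf p f A (e j) (e j)\<bar> \<le> 2 * \<beta> * u\<^sup>2 + 2 * \<beta> * u"
    using quad_common[OF j x x1] unfolding \<beta>_def by blast
  have F2: "(c j)\<^sup>2 * u\<^sup>2 + g * u\<^sup>2 \<le> (\<Sum>k=1..p. (y \<bullet> e k)\<^sup>2 * (c k)\<^sup>2)"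
  proof -
    have "(\<Sum>k=1..p. (y \<bullet> e k)\<^sup>2 * ((c j)\<^sup>2 + g)) \<le> (\<Sum>k=1..p. (y \<bullet> e k)\<^sup>2 * (c k)\<^sup>2)"
    proof (intro sum_mono)
      fix k assume k: "k \<in> {1..p}"
      show "(y \<bullet> e k)\<^sup>2 * ((c j)\<^sup>2 + g) \<le> (y \<bullet> e k)\<^sup>2 * (c k)\<^sup>2"
      proof (cases "k < j")
        case True then show ?thesis using gap k by (intro mult_left_mono) auto
      next
        case False
        then have "y \<bullet> e k = 0" using yej yek xz k by (cases "k = j") auto
        then show ?thesis by simp
      qed
    qed
    moreover have "(\<Sum>k=1..p. (y \<bullet> e k)\<^sup>2 * ((c j)\<^sup>2 + g)) = (\<Sum>k=1..p. (y \<bullet> e k)\<^sup>2) * ((c j)\<^sup>2 + g)"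
      by (rule sum_distrib_right[symmetric])
    moreover have "(\<Sum>k=1..p. (y \<bullet> e k)\<^sup>2) * ((c j)\<^sup>2 + g) = (c j)\<^sup>2 * u\<^sup>2 + g * u\<^sup>2"
      unfolding sy by (simp add: algebra_simps)
    ultimately show ?thesis by simp
  qed
  have F4: "t\<^sup>2 * (c j)\<^sup>2 + (c j)\<^sup>2 * u\<^sup>2 = (c j)\<^sup>2"
    using tu by (metis distrib_right mult.commute mult_1)
  have bpos: "\<beta> \<ge> 0" unfolding \<beta>_def by (simp add: sum_nonneg)
  have F5: "(g / 2) * u\<^sup>2 \<le> g * u\<^sup>2 - 4 * \<beta> * u\<^sup>2"
  proof -
    have "g / 2 \<le> g - 4 * \<beta>" using small unfolding \<beta>_def by simp
    then have "(g / 2) * u\<^sup>2 \<le> (g - 4 * \<beta>) * u\<^sup>2" by (intro mult_right_mono) auto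
    then show ?thesis by (simp add: algebra_simps)
  qed
  have F6: "- 8 * \<beta>\<^sup>2 / g \<le> (g / 2) * u\<^sup>2 - 4 * \<beta> * u" by (rule sq_complete[OF g])
  show ?thesis unfolding \<beta>_def[symmetric] using mx F2 F4 F5 F6 Bd by linarith
qed

lemma quad_upper:
  assumes j: "j \<in> {1..p}" and g: "g > 0"
    and gap: "\<forall>k\<in>{1..p}. j < k \<longrightarrow> (c k)\<^sup>2 \<le> (c j)\<^sup>2 - g"
    and small: "8 * (\<Sum>k=1..p. norm (A (f k))) \<le> g"
    and x: "x \<in> L" and x1: "norm x = 1" and xz: "\<forall>k\<in>{1..p}. k < j \<longrightarrow> x \<bullet> e k = 0"
  shows "(norm (Tproj p f x))\<^sup>2 + 2 * Bf p f A x x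
         \<le> (c j)\<^sup>2 + 2 * Bf p f A (e j) (e j) + 8 * (\<Sum>k=1..p. norm (A (f k)))\<^sup>2 / g"
proof -
  define \<beta> where "\<beta> = (\<Sum>k=1..p. norm (A (f k)))"
  obtain t y u where tu: "t\<^sup>2 + u\<^sup>2 = 1" and u0: "u \<ge> 0"
    and mx: "(norm (Tproj p f x))\<^sup>2 = t\<^sup>2 * (c j)\<^sup>2 + (\<Sum>k=1..p. (y \<bullet> e k)\<^sup>2 * (c k)\<^sup>2)"
    and sy: "(\<Sum>k=1..p. (y \<bullet> e k)\<^sup>2) = u\<^sup>2" and yej: "y \<bullet> e j = 0"
    and yek: "\<forall>k\<in>{1..p}. k \<noteq> j \<longrightarrow> y \<bullet> e k = x \<bullet> e k"
    and Bd: "\<bar>Bf p f A x x - Bf p f A (e j) (e j)\<bar> \<le> 2 * \<beta> * u\<^sup>2 + 2 * \<beta> * u"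
    using quad_common[OF j x x1] unfolding \<beta>_def by blast
  have F2: "(\<Sum>k=1..p. (y \<bullet> e k)\<^sup>2 * (c k)\<^sup>2) \<le> (c j)\<^sup>2 * u\<^sup>2 - g * u\<^sup>2"
  proof -
    have "(\<Sum>k=1..p. (y \<bullet> e k)\<^sup>2 * (c k)\<^sup>2) \<le> (\<Sum>k=1..p. (y \<bullet> e k)\<^sup>2 * ((c j)\<^sup>2 - g))"
    proof (intro sum_mono)
      fix k assume k: "k \<in> {1..p}"
      show "(y \<bullet> e k)\<^sup>2 * (c k)\<^sup>2 \<le> (y \<bullet> e k)\<^sup>2 * ((c j)\<^sup>2 - g)"
      proof (cases "j < k")
        case True then show ?thesis using gap k by (intro mult_left_mono) auto
      next
        case False
        then have "y \<bullet> e k = 0" using yej yek xz k by (cases "k = j") auto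
        then show ?thesis by simp
      qed
    qed
    moreover have "(\<Sum>k=1..p. (y \<bullet> e k)\<^sup>2 * ((c j)\<^sup>2 - g)) = (\<Sum>k=1..p. (y \<bullet> e k)\<^sup>2) * ((c j)\<^sup>2 - g)"
      by (rule sum_distrib_right[symmetric])
    moreover have "(\<Sum>k=1..p. (y \<bullet> e k)\<^sup>2) * ((c j)\<^sup>2 - g) = (c j)\<^sup>2 * u\<^sup>2 - g * u\<^sup>2"
      unfolding sy by (simp add: algebra_simps)
    ultimately show ?thesis by simp
  qed
  have F4: "t\<^sup>2 * (c j)\<^sup>2 + (c j)\<^sup>2 * u\<^sup>2 = (c j)\<^sup>2"
    using tu by (metis distrib_right mult.commute mult_1)
  have bpos: "\<beta> \<ge> 0" unfolding \<beta>_def by (simp add: sum_nonneg)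
  have F5: "(g / 2) * u\<^sup>2 \<le> g * u\<^sup>2 - 4 * \<beta> * u\<^sup>2"
  proof -
    have "g / 2 \<le> g - 4 * \<beta>" using small unfolding \<beta>_def by simp
    then have "(g / 2) * u\<^sup>2 \<le> (g - 4 * \<beta>) * u\<^sup>2" by (intro mult_right_mono) auto
    then show ?thesis by (simp add: algebra_simps)
  qed
  have F6: "- 8 * \<beta>\<^sup>2 / g \<le> (g / 2) * u\<^sup>2 - 4 * \<beta> * u" by (rule sq_complete[OF g])
  show ?thesis unfolding \<beta>_def[symmetric] using mx F2 F4 F5 F6 Bd by linarith
qed

end



lemma sv_estimate:
  fixes A :: "'a::euclidean_space \<Rightarrow> 'a"
  assumes sL: "subspace L" and dL: "dim L = p" and e: "orthonormal_basis p e L"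
    and sM: "subspace M" and f: "orthonormal_basis p f M"
    and ef: "\<forall>i\<in>{1..p}. \<forall>k\<in>{1..p}. i \<noteq> k \<longrightarrow> e i \<bullet> f k = 0"
    and efc: "\<forall>k\<in>{1..p}. e k \<bullet> f k = c k"
    and A: "linear A" and AM: "\<forall>u\<in>M. A u \<in> orthogonal_comp M"
    and K: "K = {u + A u | u. u \<in> M}" and sK: "subspace K" and dK: "dim K = p"
    and e': "orthonormal_basis p e' L" and g': "orthonormal_basis p g' K"
    and sv: "is_singular_values p (\<lambda>i k. e' i \<bullet> g' k) \<sigma>"
    and j: "j \<in> {1..p}" and g: "g > 0"
    and gapl: "\<forall>k\<in>{1..p}. k < j \<longrightarrow> (c j)\<^sup>2 + g \<le> (c k)\<^sup>2"
    and gapu: "\<forall>k\<in>{1..p}. j < k \<longrightarrow> (c k)\<^sup>2 \<le> (c j)\<^sup>2 - g"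
    and small: "8 * (\<Sum>k=1..p. norm (A (f k))) \<le> g"
  shows "\<bar>(\<sigma> j)\<^sup>2 - ((c j)\<^sup>2 + 2 * Bf p f A (e j) (e j))\<bar>
     \<le> (\<Sum>k=1..p. norm (A (f k)))\<^sup>2 + 8 * (\<Sum>k=1..p. norm (A (f k)))\<^sup>2 / g"
proof -
  let ?b = "\<Sum>k=1..p. norm (A (f k))"
  have eo: "ortho p e" by (rule onb_ortho[OF e])
  have est: "\<bar>(norm (Tproj p g' x))\<^sup>2 - ((norm (Tproj p f x))\<^sup>2 + 2 * Bf p f A x x)\<bar> \<le> ?b\<^sup>2"
    if "norm x = 1" for x
    using graph_est[OF sM f A AM K sK g', of x] that unfolding Bf_def by simp
  have lo: "(c j)\<^sup>2 + 2 * Bf p f A (e j) (e j) - 8 * ?b\<^sup>2 / g - ?b\<^sup>2 \<le> (\<sigma> j)\<^sup>2"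
  proof -
    let ?S = "span (e ` {1..j})"
    have Ap: "{1..j} \<subseteq> {1..p}" using j by auto
    have SL: "?S \<subseteq> L" using onb_in[OF e] Ap sL by (intro span_minimal) auto
    have dS: "dim ?S \<ge> j" using span_ortho_dim[OF eo Ap] by simp
    obtain x where xS: "x \<in> ?S" and x1: "norm x = 1" and xs: "(norm (Tproj p g' x))\<^sup>2 \<le> (\<sigma> j)\<^sup>2"
      using cf_lower[OF sL dL e' sK dK g' sv j subspace_span SL dS] by blast
    have xL: "x \<in> L" using xS SL by auto
    have xz: "\<forall>k\<in>{1..p}. j < k \<longrightarrow> x \<bullet> e k = 0"
      using span_ortho_coeff[OF eo Ap xS] by auto
    have q: "(c j)\<^sup>2 + 2 * Bf p f A (e j) (e j) - 8 * ?b\<^sup>2 / g \<le> (norm (Tproj p f x))\<^sup>2 + 2 * Bf p f A x x"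
      by (rule quad_lower[OF sL dL e sM f ef efc A j g gapl small xL x1 xz])
    show ?thesis using q est[OF x1] xs by linarith
  qed
  have up: "(\<sigma> j)\<^sup>2 \<le> (c j)\<^sup>2 + 2 * Bf p f A (e j) (e j) + 8 * ?b\<^sup>2 / g + ?b\<^sup>2"
  proof -
    let ?S = "span (e ` {j..p})"
    have Ap: "{j..p} \<subseteq> {1..p}" using j by auto
    have SL: "?S \<subseteq> L" using onb_in[OF e] Ap sL by (intro span_minimal) auto
    have dS: "dim ?S \<ge> p + 1 - j" using span_ortho_dim[OF eo Ap] by simp
    obtain x where xS: "x \<in> ?S" and x1: "norm x = 1" and xs: "(\<sigma> j)\<^sup>2 \<le> (norm (Tproj p g' x))\<^sup>2"
      using cf_upper[OF sL dL e' sK dK g' sv j subspace_span SL dS] by blast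
    have xL: "x \<in> L" using xS SL by auto
    have xz: "\<forall>k\<in>{1..p}. k < j \<longrightarrow> x \<bullet> e k = 0"
      using span_ortho_coeff[OF eo Ap xS] by auto
    have q: "(norm (Tproj p f x))\<^sup>2 + 2 * Bf p f A x x \<le> (c j)\<^sup>2 + 2 * Bf p f A (e j) (e j) + 8 * ?b\<^sup>2 / g"
      by (rule quad_upper[OF sL dL e sM f ef efc A j g gapu small xL x1 xz])
    show ?thesis using q est[OF x1] xs by linarith
  qed
  show ?thesis using lo up by linarith
qed

lemma deriv_from_approx:
  fixes F G :: "real \<Rightarrow> real"
  assumes G: "(G has_real_derivative D) (at 0)"
    and ev: "eventually (\<lambda>x. \<bar>F x - G x\<bar> \<le> C * x\<^sup>2) (nhds 0)"
  shows "(F has_real_derivative D) (at 0)"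
proof -
  define r where "r x = F x - G x" for x
  have r0: "r 0 = 0" using eventually_nhds_x_imp_x[OF ev] unfolding r_def by simp
  have evr: "eventually (\<lambda>x. norm ((r x - r 0) / (x - 0)) \<le> \<bar>C\<bar> * \<bar>x\<bar>) (at 0)"
  proof -
    have "eventually (\<lambda>x. \<bar>r x\<bar> \<le> C * x\<^sup>2) (at 0)"
      using ev unfolding r_def eventually_at_filter by (rule eventually_mono) auto
    then show ?thesis
    proof (rule eventually_mono)
      fix x assume h: "\<bar>r x\<bar> \<le> C * x\<^sup>2"
      show "norm ((r x - r 0) / (x - 0)) \<le> \<bar>C\<bar> * \<bar>x\<bar>"
      proof (cases "x = 0")
        case True then show ?thesis by simp
      next
        case False
        have "C * x\<^sup>2 \<le> \<bar>C\<bar> * x\<^sup>2" by (rule mult_right_mono) auto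
        also have "x\<^sup>2 = \<bar>x\<bar> * \<bar>x\<bar>" by (simp add: power2_eq_square)
        finally have "\<bar>r x\<bar> \<le> \<bar>C\<bar> * \<bar>x\<bar> * \<bar>x\<bar>" using h by (simp add: mult.assoc power2_eq_square)
        then show ?thesis using False r0 by (simp add: divide_le_eq)
      qed
    qed
  qed
  have "((\<lambda>x. \<bar>C\<bar> * \<bar>x\<bar>) \<longlongrightarrow> 0) (at 0)"
    by (auto intro!: tendsto_eq_intros)
  then have "((\<lambda>x. (r x - r 0) / (x - 0)) \<longlongrightarrow> 0) (at 0)"
    using Lim_null_comparison[OF evr] by blast
  then have "(r has_real_derivative 0) (at 0)"
    by (simp add: has_field_derivative_iff)
  then have "((\<lambda>x. G x + r x) has_real_derivative D + 0) (at 0)"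
    by (intro DERIV_add G)
  then show ?thesis unfolding r_def by simp
qed



lemma Tproj_le:
  assumes g: "orthonormal_basis q g K" and sK: "subspace K"
  shows "norm (Tproj q g x) \<le> norm x"
proof (cases "norm (Tproj q g x) = 0")
  case True then show ?thesis by simp
next
  case False
  have "(norm (Tproj q g x))\<^sup>2 = x \<bullet> Tproj q g x" by (rule Tproj_norm2[OF g sK])
  also have "\<dots> \<le> norm x * norm (Tproj q g x)" by (rule norm_cauchy_schwarz)
  finally show ?thesis using False by (simp add: power2_eq_square mult_le_cancel_right)
qed

lemma strict_all:
  fixes c :: "nat \<Rightarrow> real"
  assumes "\<forall>j. 1 \<le> j \<and> j < p \<longrightarrow> c (j + 1) < c j"
  shows "1 \<le> a \<Longrightarrow> a < b \<Longrightarrow> b \<le> p \<Longrightarrow> c b < c a"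
proof (induction b)
  case 0 then show ?case by simp
next
  case (Suc b)
  show ?case
  proof (cases "a = b")
    case True then show ?thesis using assms Suc.prems by simp
  next
    case False
    then have "a < b" using Suc.prems by simp
    then have "c b < c a" using Suc by simp
    moreover have "c (b + 1) < c b" using assms Suc.prems \<open>a < b\<close> by simp
    ultimately show ?thesis by simp
  qed
qed

theorem proposition8:
  fixes p q :: nat and L M :: "(real^'n) set" and I :: "real set"
    and Mc :: "real \<Rightarrow> (real^'n) set"
    and e f :: "nat \<Rightarrow> real^'n" and r :: "nat \<Rightarrow> real^'n"
    and H :: "real^'n \<Rightarrow> real^'n" and h :: "nat \<Rightarrow> nat \<Rightarrow> real"
  assumes dim: "CARD('n) = p + q" and pq: "p \<le> q"
    and L: "L \<in> Gr p TYPE('n)" and M: "M \<in> Gr p TYPE('n)"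
    and psi1: "jordan_angle L M 1 \<noteq> 0"
    and psip: "jordan_angle L M p \<noteq> pi / 2"
    and distinct: "\<forall>j. 1 \<le> j \<and> j < p \<longrightarrow> jordan_angle L M (j + 1) \<noteq> jordan_angle L M j"
    and e: "orthonormal_basis p e L" and f: "orthonormal_basis p f M"
    and ef: "\<forall>i\<in>{1..p}. \<forall>j\<in>{1..p}. i \<noteq> j \<longrightarrow> e i \<bullet> f j = 0"
    and efj: "\<forall>j\<in>{1..p}. e j \<bullet> f j = cos (jordan_angle L M j)"
    and r: "orthonormal_basis q r (orthogonal_comp M)"
    and er: "\<forall>j\<in>{1..p}. e j = cos (jordan_angle L M j) *\<^sub>R f j - sin (jordan_angle L M j) *\<^sub>R r j"
    and H_lin: "linear H" and H_range: "H ` M \<subseteq> orthogonal_comp M"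
    and h: "\<forall>j\<in>{1..p}. H (f j) = (\<Sum>k=1..q. h j k *\<^sub>R r k)"
    and curve: "smooth_Gr_curve p q I Mc" and I0: "0 \<in> I" and M0: "Mc 0 = M"
    and tangent: "curve_derivative_at0 Mc H"
  shows "\<forall>j\<in>{1..p}. ((\<lambda>\<epsilon>. jordan_angle L (Mc \<epsilon>) j) has_real_derivative h j j) (at 0)"
proof (intro ballI)
  fix j assume j: "j \<in> {1..p}"
  have sL: "subspace L" and dL: "dim L = p" using L unfolding Gr_def by auto
  have sM: "subspace M" and dM: "dim M = p" using M unfolding Gr_def by auto
  define e0 where "e0 = (SOME e. orthonormal_basis p e L)"
  have e0: "orthonormal_basis p e0 L" unfolding e0_def using onb_exists[OF sL dL] by (rule someI_ex)
  define gK where "gK K = (SOME f. orthonormal_basis p f K)" for K :: "(real^'n) set"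
  define SV where "SV K = (SOME \<sigma>. is_singular_values p (\<lambda>i k. e0 i \<bullet> gK K k) \<sigma>)" for K
  have ja: "jordan_angle L K i = arccos (SV K i)" for K i
    unfolding jordan_angle_def Let_def dL singular_value_def SV_def e0_def gK_def by simp
  have svK: "orthonormal_basis p (gK K) K \<and> is_singular_values p (\<lambda>i k. e0 i \<bullet> gK K k) (SV K)"
    if KG: "K \<in> Gr p TYPE('n)" for K
  proof -
    have sK: "subspace K" and dK: "dim K = p" using KG unfolding Gr_def by auto
    have g: "orthonormal_basis p (gK K) K" unfolding gK_def using onb_exists[OF sK dK] by (rule someI_ex)
    have "is_singular_values p (\<lambda>i k. e0 i \<bullet> gK K k) (SV K)"
      unfolding SV_def using svd_exists[OF sL dL e0 sK dK g] by (rule someI_ex)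
    then show ?thesis using g by blast
  qed
  define \<sigma>0 where "\<sigma>0 = SV M"
  have g0: "orthonormal_basis p (gK M) M" and sv0: "is_singular_values p (\<lambda>i k. e0 i \<bullet> gK M k) \<sigma>0"
    using svK[OF M] unfolding \<sigma>0_def by auto
  have \<sigma>0pos: "\<forall>i\<in>{1..p}. 0 \<le> \<sigma>0 i" and \<sigma>0srt: "\<forall>i. 1 \<le> i \<and> i < p \<longrightarrow> \<sigma>0 (i + 1) \<le> \<sigma>0 i"
    using sv0 unfolding is_singular_values_def by auto
  have \<sigma>0le1: "\<sigma>0 i \<le> 1" if i: "i \<in> {1..p}" for i
  proof -
    have "dim L \<ge> p + 1 - i" using dL i by auto
    then obtain x where xL: "x \<in> L" and x1: "norm x = 1" and xs: "(\<sigma>0 i)\<^sup>2 \<le> (norm (Tproj p (gK M) x))\<^sup>2"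
      using cf_upper[OF sL dL e0 sM dM g0 sv0 i sL subset_refl] by blast
    have "norm (Tproj p (gK M) x) \<le> 1" using Tproj_le[OF g0 sM, of x] x1 by simp
    then have "(norm (Tproj p (gK M) x))\<^sup>2 \<le> 1" by (simp add: power_le_one)
    then have s1: "(\<sigma>0 i)\<^sup>2 \<le> 1\<^sup>2" using xs by simp
    show ?thesis by (rule power2_le_imp_le[OF s1]) simp
  qed
  define c where "c k = e k \<bullet> f k" for k
  have ceq: "c k = \<sigma>0 k" if k: "k \<in> {1..p}" for k
  proof -
    have a: "0 \<le> \<sigma>0 k" using \<sigma>0pos k by blast
    have "c k = cos (arccos (\<sigma>0 k))" unfolding c_def \<sigma>0_def using efj k ja[of M k] by simp
    also have "\<dots> = \<sigma>0 k" using a \<sigma>0le1[OF k] by (intro cos_arccos) auto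
    finally show ?thesis .
  qed
  have psi_c: "jordan_angle L M k = arccos (c k)" if k: "k \<in> {1..p}" for k
    using ja[of M k] ceq[OF k] unfolding \<sigma>0_def by simp
  have p1: "1 \<le> p" using j by simp
  have srt: "\<forall>i. 1 \<le> i \<and> i < p \<longrightarrow> c (i + 1) < c i"
  proof (intro allI impI)
    fix i assume i: "1 \<le> i \<and> i < p"
    have "c (i + 1) \<le> c i" using \<sigma>0srt i ceq[of i] ceq[of "i+1"] by auto
    moreover have "c (i + 1) \<noteq> c i" using distinct i psi_c[of i] psi_c[of "i+1"] by auto
    ultimately show "c (i + 1) < c i" by simp
  qed
  have strict: "c b < c a" if "a \<in> {1..p}" "b \<in> {1..p}" "a < b" for a b
    using strict_all[OF srt] that by auto
  have c1: "c 1 < 1"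
  proof -
    have "c 1 \<le> 1" using ceq[of 1] \<sigma>0le1[of 1] p1 by simp
    moreover have "c 1 \<noteq> 1" using psi1 psi_c[of 1] p1 by auto
    ultimately show ?thesis by simp
  qed
  have cp: "c p > 0"
  proof -
    have "c p \<ge> 0" using ceq[of p] \<sigma>0pos p1 by simp
    moreover have "c p \<noteq> 0" using psip psi_c[of p] p1 by auto
    ultimately show ?thesis by simp
  qed
  have cpos: "c k > 0" if "k \<in> {1..p}" for k
    using strict[of k p] cp that by (cases "k = p") auto
  have clt1: "c k < 1" if "k \<in> {1..p}" for k
    using strict[of 1 k] c1 that by (cases "k = 1") auto
  define s where "s k = sin (jordan_angle L M k)" for k
  have s_eq: "s k = sqrt (1 - (c k)\<^sup>2)" if "k \<in> {1..p}" for k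
    unfolding s_def psi_c[OF that] using cpos[OF that] clt1[OF that] by (simp add: sin_arccos)
  have cos_c: "cos (jordan_angle L M k) = c k" if "k \<in> {1..p}" for k
    using efj that unfolding c_def by simp
  have spos: "s j > 0" using s_eq[OF j] cpos[OF j] clt1[OF j]
    by (simp add: power_less_one_iff abs_less_iff)
  define Gs where "Gs = (\<lambda>(a, b). \<bar>(c a)\<^sup>2 - (c b)\<^sup>2\<bar>) ` {(a, b). a \<in> {1..p} \<and> b \<in> {1..p} \<and> a \<noteq> b}"
  define g where "g = Min (insert 1 Gs)"
  have fGs: "finite Gs" unfolding Gs_def
    by (rule finite_imageI) (rule finite_subset[of _ "{1..p} \<times> {1..p}"], auto)
  have gpos: "g > 0" unfolding g_def
  proof (subst Min_gr_iff)
    show "finite (insert 1 Gs)" using fGs by simp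
    show "insert 1 Gs \<noteq> {}" by simp
    show "\<forall>a\<in>insert 1 Gs. 0 < a"
    proof
      fix z assume "z \<in> insert 1 Gs"
      then consider "z = 1" | a b where "a \<in> {1..p}" "b \<in> {1..p}" "a \<noteq> b" "z = \<bar>(c a)\<^sup>2 - (c b)\<^sup>2\<bar>"
        unfolding Gs_def by auto
      then show "0 < z"
      proof cases
        case 1 then show ?thesis by simp
      next
        case (2 a b)
        have "c a \<noteq> c b" using strict[of a b] strict[of b a] 2 by (cases "a < b") auto
        then have "(c a)\<^sup>2 \<noteq> (c b)\<^sup>2" using cpos[OF 2(1)] cpos[OF 2(2)] by (simp add: power2_eq_iff)
        then show ?thesis using 2 by simp
      qed
    qed
  qed
  have gle: "g \<le> \<bar>(c a)\<^sup>2 - (c b)\<^sup>2\<bar>" if "a \<in> {1..p}" "b \<in> {1..p}" "a \<noteq> b" for a b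
  proof -
    have "\<bar>(c a)\<^sup>2 - (c b)\<^sup>2\<bar> \<in> insert 1 Gs" unfolding Gs_def using that by auto
    then show ?thesis unfolding g_def using fGs by simp
  qed
  have gapl: "\<forall>k\<in>{1..p}. k < j \<longrightarrow> (c j)\<^sup>2 + g \<le> (c k)\<^sup>2"
  proof (intro ballI impI)
    fix k assume k: "k \<in> {1..p}" and kj: "k < j"
    have "c j < c k" using strict[OF k j kj] .
    then have "(c j)\<^sup>2 < (c k)\<^sup>2" using cpos[OF j] by (simp add: power_strict_mono)
    then show "(c j)\<^sup>2 + g \<le> (c k)\<^sup>2" using gle[OF k j] kj by auto
  qed
  have gapu: "\<forall>k\<in>{1..p}. j < k \<longrightarrow> (c k)\<^sup>2 \<le> (c j)\<^sup>2 - g"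
  proof (intro ballI impI)
    fix k assume k: "k \<in> {1..p}" and kj: "j < k"
    have "c k < c j" using strict[OF j k kj] .
    then have "(c k)\<^sup>2 < (c j)\<^sup>2" using cpos[OF k] by (simp add: power_strict_mono)
    then show "(c k)\<^sup>2 \<le> (c j)\<^sup>2 - g" using gle[OF k j] kj by auto
  qed
  obtain \<delta> A where \<delta>: "\<delta> > 0" and gc: "graph_chart M Mc 0 \<delta> A"
    and dA: "\<forall>x\<in>M. ((\<lambda>\<epsilon>. A \<epsilon> x) has_vector_derivative H x) (at 0)"
    using tangent unfolding curve_derivative_at0_def M0 by blast
  have chart: "linear (A \<epsilon>) \<and> (\<forall>u\<in>M. A \<epsilon> u \<in> orthogonal_comp M) \<and> Mc \<epsilon> = {u + A \<epsilon> u | u. u \<in> M}"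
    if "\<bar>\<epsilon>\<bar> < \<delta>" for \<epsilon>
    using gc that unfolding graph_chart_def by auto
  have A0: "A 0 x = 0" if x: "x \<in> M" for x
  proof -
    have ch: "linear (A 0)" "\<forall>u\<in>M. A 0 u \<in> orthogonal_comp M" "M = {u + A 0 u | u. u \<in> M}"
      using chart[of 0] \<delta> M0 by auto
    have "x + A 0 x \<in> M" using x ch(3) by blast
    then have "(x + A 0 x) - x \<in> M" using x sM by (intro subspace_diff) auto
    then have "A 0 x \<in> M" by simp
    moreover have "A 0 x \<in> orthogonal_comp M" using ch(2) x by blast
    ultimately have "A 0 x \<bullet> A 0 x = 0" using orth_compD by blast
    then show ?thesis by simp
  qed
  have fM: "f k \<in> M" if "k \<in> {1..p}" for k using onb_in[OF f that] .
  have efc: "\<forall>k\<in>{1..p}. e k \<bullet> f k = c k" unfolding c_def by simp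
  define Cb where "Cb = (\<Sum>k=1..p. norm (H (f k)) + 1)"
  have Cbpos: "Cb > 0" unfolding Cb_def using p1
    by (intro sum_pos) (auto intro: add_nonneg_pos)
  have evAk: "eventually (\<lambda>\<epsilon>. norm (A \<epsilon> (f k)) \<le> (norm (H (f k)) + 1) * \<bar>\<epsilon>\<bar>) (nhds 0)"
    if k: "k \<in> {1..p}" for k
  proof -
    have "((\<lambda>\<epsilon>. A \<epsilon> (f k)) has_derivative (\<lambda>x. x *\<^sub>R H (f k))) (at 0)"
      using dA fM[OF k] unfolding has_vector_derivative_def by blast
    then have "\<forall>e>0. \<exists>d>0. \<forall>y. norm (y - 0) < d \<longrightarrow>
        norm (A y (f k) - A 0 (f k) - (y - 0) *\<^sub>R H (f k)) \<le> e * norm (y - 0)"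
      unfolding has_derivative_at_alt by blast
    from this[rule_format, OF zero_less_one] obtain d where d: "d > 0" and dd: "\<forall>y. norm (y - 0) < d \<longrightarrow>
        norm (A y (f k) - A 0 (f k) - (y - 0) *\<^sub>R H (f k)) \<le> 1 * norm (y - 0)"
      by blast
    show ?thesis unfolding eventually_nhds_metric
    proof (intro exI[of _ d] conjI allI impI d)
      fix y :: real assume "dist y 0 < d"
      then have "norm (A y (f k) - y *\<^sub>R H (f k)) \<le> \<bar>y\<bar>" using dd A0[OF fM[OF k]] by (simp add: dist_norm)
      moreover have "norm (A y (f k)) \<le> norm (y *\<^sub>R H (f k)) + norm (A y (f k) - y *\<^sub>R H (f k))"
        by (rule norm_triangle_sub)
      ultimately have "norm (A y (f k)) \<le> \<bar>y\<bar> + norm (y *\<^sub>R H (f k))" by simp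
      then show "norm (A y (f k)) \<le> (norm (H (f k)) + 1) * \<bar>y\<bar>" by (simp add: algebra_simps)
    qed
  qed
  have ev\<beta>: "eventually (\<lambda>\<epsilon>. (\<Sum>k=1..p. norm (A \<epsilon> (f k))) \<le> Cb * \<bar>\<epsilon>\<bar>) (nhds 0)"
  proof -
    have "eventually (\<lambda>\<epsilon>. \<forall>k\<in>{1..p}. norm (A \<epsilon> (f k)) \<le> (norm (H (f k)) + 1) * \<bar>\<epsilon>\<bar>) (nhds 0)"
      by (rule eventually_ball_finite) (use evAk in auto)
    then show ?thesis
    proof (rule eventually_mono)
      fix \<epsilon> :: real assume "\<forall>k\<in>{1..p}. norm (A \<epsilon> (f k)) \<le> (norm (H (f k)) + 1) * \<bar>\<epsilon>\<bar>"
      then have "(\<Sum>k=1..p. norm (A \<epsilon> (f k))) \<le> (\<Sum>k=1..p. (norm (H (f k)) + 1) * \<bar>\<epsilon>\<bar>)"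
        by (intro sum_mono) auto
      also have "\<dots> = Cb * \<bar>\<epsilon>\<bar>" unfolding Cb_def by (simp add: sum_distrib_right)
      finally show "(\<Sum>k=1..p. norm (A \<epsilon> (f k))) \<le> Cb * \<bar>\<epsilon>\<bar>" .
    qed
  qed
  have oI: "open I" and IG: "\<forall>\<epsilon>\<in>I. Mc \<epsilon> \<in> Gr p TYPE('n)" using curve unfolding smooth_Gr_curve_def by auto
  have evI: "eventually (\<lambda>\<epsilon>. \<epsilon> \<in> I) (nhds 0)" by (rule eventually_nhds_in_open[OF oI I0])
  have ev\<delta>: "eventually (\<lambda>\<epsilon>. \<bar>\<epsilon>\<bar> < \<delta>) (nhds (0::real))"
    unfolding eventually_nhds_metric using \<delta> by (intro exI[of _ \<delta>]) (auto simp: dist_norm)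
  have evs: "eventually (\<lambda>\<epsilon>. 8 * (Cb * \<bar>\<epsilon>\<bar>) \<le> g) (nhds (0::real))"
    unfolding eventually_nhds_metric
  proof (intro exI[of _ "g / (8 * Cb)"] conjI allI impI)
    show "g / (8 * Cb) > 0" using gpos Cbpos by simp
    fix y :: real assume "dist y 0 < g / (8 * Cb)"
    then have "\<bar>y\<bar> * (8 * Cb) < g" using Cbpos by (simp add: dist_norm pos_less_divide_eq)
    then show "8 * (Cb * \<bar>y\<bar>) \<le> g" by (simp add: algebra_simps)
  qed
  define \<phi> where "\<phi> \<epsilon> = Bf p f (A \<epsilon>) (e j) (e j)" for \<epsilon>
  define F where "F \<epsilon> = (SV (Mc \<epsilon>) j)\<^sup>2" for \<epsilon>
  define K0 where "K0 = Cb\<^sup>2 + 8 * Cb\<^sup>2 / g"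
  have evF: "eventually (\<lambda>\<epsilon>. \<bar>F \<epsilon> - ((c j)\<^sup>2 + 2 * \<phi> \<epsilon>)\<bar> \<le> K0 * \<epsilon>\<^sup>2) (nhds 0)"
    using ev\<beta> evI ev\<delta> evs
  proof (eventually_elim)
    case (elim \<epsilon>)
    let ?K = "Mc \<epsilon>"
    let ?b = "\<Sum>k=1..p. norm (A \<epsilon> (f k))"
    have KG: "?K \<in> Gr p TYPE('n)" using IG elim(2) by blast
    have sK: "subspace ?K" and dK: "dim ?K = p" using KG unfolding Gr_def by auto
    have ch: "linear (A \<epsilon>)" "\<forall>u\<in>M. A \<epsilon> u \<in> orthogonal_comp M" "?K = {u + A \<epsilon> u | u. u \<in> M}"
      using chart[OF elim(3)] by auto
    have gK: "orthonormal_basis p (gK ?K) ?K" and svk: "is_singular_values p (\<lambda>i k. e0 i \<bullet> gK ?K k) (SV ?K)"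
      using svK[OF KG] by auto
    have b0: "0 \<le> ?b" by (simp add: sum_nonneg)
    have small: "8 * ?b \<le> g" using elim(1) elim(4) by linarith
    have est: "\<bar>(SV ?K j)\<^sup>2 - ((c j)\<^sup>2 + 2 * Bf p f (A \<epsilon>) (e j) (e j))\<bar> \<le> ?b\<^sup>2 + 8 * ?b\<^sup>2 / g"
      by (rule sv_estimate[OF sL dL e sM f ef efc ch(1) ch(2) ch(3) sK dK e0 gK svk j gpos gapl gapu small])
    have b2: "?b\<^sup>2 \<le> Cb\<^sup>2 * \<epsilon>\<^sup>2"
    proof -
      have "?b\<^sup>2 \<le> (Cb * \<bar>\<epsilon>\<bar>)\<^sup>2" using elim(1) b0 by (intro power_mono) auto
      then show ?thesis by (simp add: power_mult_distrib)
    qed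
    have b3: "8 * ?b\<^sup>2 / g \<le> 8 * (Cb\<^sup>2 * \<epsilon>\<^sup>2) / g" using b2 gpos by (intro divide_right_mono) auto
    show ?case using est b2 b3 unfolding F_def \<phi>_def K0_def by (simp add: algebra_simps)
  qed
  define \<rho> where "\<rho> \<epsilon> = r j \<bullet> A \<epsilon> (f j)" for \<epsilon>
  have ejr: "e j - c j *\<^sub>R f j = - (s j *\<^sub>R r j)"
    using er j cos_c[OF j] unfolding s_def by simp
  have ev\<phi>: "eventually (\<lambda>\<epsilon>. \<phi> \<epsilon> = - (c j * s j) * \<rho> \<epsilon>) (nhds 0)"
    using ev\<delta>
  proof (eventually_elim)
    case (elim \<epsilon>)
    have lin: "linear (A \<epsilon>)" using chart[OF elim] by auto
    have "Tproj p f (e j) = c j *\<^sub>R f j" by (rule mej[OF sL dL e sM f ef efc lin j])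
    then have "\<phi> \<epsilon> = (e j - c j *\<^sub>R f j) \<bullet> A \<epsilon> (c j *\<^sub>R f j)" unfolding \<phi>_def Bf_def by simp
    also have "\<dots> = - (c j * s j) * \<rho> \<epsilon>" unfolding ejr \<rho>_def using linear_scale[OF lin] by simp
    finally show ?case .
  qed
  have d\<rho>: "(\<rho> has_real_derivative h j j) (at 0)"
  proof -
    have "((\<lambda>\<epsilon>. A \<epsilon> (f j)) has_vector_derivative H (f j)) (at 0)" using dA fM[OF j] by blast
    then have "((\<lambda>\<epsilon>. r j \<bullet> A \<epsilon> (f j)) has_vector_derivative r j \<bullet> H (f j)) (at 0)"
      by (rule bounded_linear.has_vector_derivative[OF bounded_linear_inner_right])
    moreover have "r j \<bullet> H (f j) = h j j"
    proof -
      have jq: "j \<in> {1..q}" using j pq by auto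
      have "r j \<bullet> H (f j) = (\<Sum>k=1..q. (if j = k then 1 else 0) * h j k)"
        unfolding h[rule_format, OF j] inner_sum_right using onb_ortho[OF r] jq unfolding ortho_def
        by (intro sum.cong refl) auto
      also have "\<dots> = h j j" using jq by (rule sum_kron)
      finally show ?thesis .
    qed
    ultimately show ?thesis unfolding \<rho>_def by (simp add: has_real_derivative_iff_has_vector_derivative)
  qed
  define G where "G \<epsilon> = (c j)\<^sup>2 + 2 * (- (c j * s j) * \<rho> \<epsilon>)" for \<epsilon>
  define D where "D = 2 * (- (c j * s j) * h j j)"
  have dG: "(G has_real_derivative D) (at 0)"
  proof -
    have "((\<lambda>\<epsilon>. 2 * (- (c j * s j) * \<rho> \<epsilon>)) has_real_derivative D) (at 0)"
      unfolding D_def by (intro DERIV_cmult d\<rho>)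
    then have "((\<lambda>\<epsilon>. (c j)\<^sup>2 + 2 * (- (c j * s j) * \<rho> \<epsilon>)) has_real_derivative 0 + D) (at 0)"
      by (intro DERIV_add DERIV_const)
    then show ?thesis unfolding G_def by simp
  qed
  have evFG: "eventually (\<lambda>\<epsilon>. \<bar>F \<epsilon> - G \<epsilon>\<bar> \<le> K0 * \<epsilon>\<^sup>2) (nhds 0)"
    using evF ev\<phi> by eventually_elim (simp add: G_def)
  have dF: "(F has_real_derivative D) (at 0)" by (rule deriv_from_approx[OF dG evFG])
  have F0: "F 0 = (c j)\<^sup>2"
  proof -
    have "\<rho> 0 = 0" unfolding \<rho>_def using A0[OF fM[OF j]] by simp
    moreover have "\<bar>F 0 - G 0\<bar> \<le> K0 * 0\<^sup>2" using eventually_nhds_x_imp_x[OF evFG] .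
    ultimately show ?thesis unfolding G_def by simp
  qed
  have cj: "0 < c j" "c j < 1" using cpos[OF j] clt1[OF j] by auto
  have sF0: "sqrt (F 0) = c j" using F0 cj by simp
  have dsqrt: "DERIV sqrt (F 0) :> inverse (sqrt (F 0)) / 2" using F0 cj by (intro DERIV_real_sqrt) simp
  have darc: "DERIV arccos (sqrt (F 0)) :> inverse (- sqrt (1 - (sqrt (F 0))\<^sup>2))"
    unfolding sF0 using cj by (intro DERIV_arccos) auto
  have dtot: "((\<lambda>\<epsilon>. arccos (sqrt (F \<epsilon>))) has_real_derivative
      inverse (- sqrt (1 - (sqrt (F 0))\<^sup>2)) * (inverse (sqrt (F 0)) / 2 * D)) (at 0)"
    by (rule DERIV_chain2[OF darc DERIV_chain2[OF dsqrt dF]])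
  have val: "inverse (- sqrt (1 - (sqrt (F 0))\<^sup>2)) * (inverse (sqrt (F 0)) / 2 * D) = h j j"
    unfolding sF0 D_def s_eq[OF j, symmetric] using spos cj by (simp add: field_simps)
  have evJ: "eventually (\<lambda>\<epsilon>. jordan_angle L (Mc \<epsilon>) j = arccos (sqrt (F \<epsilon>))) (nhds 0)"
    using evI
  proof (eventually_elim)
    case (elim \<epsilon>)
    have "is_singular_values p (\<lambda>i k. e0 i \<bullet> gK (Mc \<epsilon>) k) (SV (Mc \<epsilon>))"
      using svK IG elim by blast
    then have "SV (Mc \<epsilon>) j \<ge> 0" using j unfolding is_singular_values_def by auto
    then show ?case unfolding ja F_def by simp
  qed
  show "((\<lambda>\<epsilon>. jordan_angle L (Mc \<epsilon>) j) has_real_derivative h j j) (at 0)"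
    using DERIV_cong_ev[OF refl evJ val[symmetric]] dtot by blast
qed


end
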